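(* Let $r\in(0,\infty)$ and $C\in\mathbb R$. Then there exist, for each $K$, a positive definite $\operatorname{var}(W^K)$ and coefficient vectors $\pi^K,\gamma^K\in\mathbb R^K$ such that, with $S$ and $d_1,d_2$ satisfying (S) and (L), assumption (P) holds and $\delta_{\text{resid}}(S)\xrightarrow{p}C$ as $K\to\infty$.
   Context: For each $K$, let $W^K=(W_1^K,\dots,W_K^K)$ be a random vector, $X=\sum_i\pi_i^KW_i^K+\xi$ with $\operatorname{cov}(\xi,W^K)=0$, and $\gamma^K\in\mathbb R^K$. $S\in\{0,1\}^K$ is random and independent of everything else; $W_1(S),W_2(S)$ are the subvectors of $W^K$ with $S_i=1$, $S_i=0$, and $\pi_l(S),\gamma_l(S)$ the corresponding subvectors of $\pi^K,\gamma^K$; $d_1=\sum_iS_i$, $d_2=K-d_1$. For random vectors $A,B$, $A^{\perp B}=A-\operatorname{cov}(A,B)\operatorname{var}(B)^{-1}B$ and $\mathbb L(A\mid1,B)$ the linear projection of $A$ on $(1,B)$. Define $$\delta_{\text{resid}}(S)=\frac{\operatorname{cov}(X,\gamma_2(S)'W_2(S)^{\perp W_1(S)})}{\operatorname{var}(\gamma_2(S)'W_2(S)^{\perp W_1(S)})}\Big/\frac{\operatorname{cov}(X,\gamma_1(S)'W_1(S)+\gamma_2(S)'\mathbb L(W_2(S)\mid1,W_1(S)))}{\operatorname{var}(\gamma_1(S)'W_1(S)+\gamma_2(S)'\mathbb L(W_2(S)\mid1,W_1(S)))}.$$ (S) $S$ is uniform over vectors in $\{0,1\}^K$ with exactly $d_1$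 ones. (L) $d_1,K\to\infty$ with $d_2/d_1\to r$. (P): (P1) there are $0<\epsilon\le M<\infty$ with $\epsilon\le\operatorname{var}(\sum_i\pi_i^KW_i^K)\le M$ for all $K$; (P2) $\operatorname{var}_S(\sum_{i,j}S_iS_j\operatorname{cov}(\pi_i^KW_i^K,\pi_j^KW_j^K))\to0$ and the same with $S_i,S_j$ replaced by $1-S_i,1-S_j$; (P3) $\sum_i\operatorname{var}(\pi_i^KW_i^K)/\operatorname{var}(\sum_i\pi_i^KW_i^K)$ converges to a finite limit. *)

theory Defs
  imports "HOL-Probability.Probability" "Jordan_Normal_Form.Determinant" "Jordan_Normal_Form.DL_Submatrix"
begin

text \<open>For each K the random vector W^K enters only through
  its covariance matrix Sig = var(W^K) (a K x K real matrix). A linear combination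
  c' W (c a K-vector) has cov(c' W, d' W) = c' Sig d, and since cov(xi, W) = 0 and
  X = pi' W + xi we have cov(X, c' W) = pi' Sig c.\<close>

definition pos_def_mat :: "real mat \<Rightarrow> nat \<Rightarrow> bool" where
  "pos_def_mat A K \<longleftrightarrow> A \<in> carrier_mat K K \<and> transpose_mat A = A \<and>
     (\<forall>x \<in> carrier_vec K. x \<noteq> 0\<^sub>v K \<longrightarrow> x \<bullet> (A *\<^sub>v x) > 0)"

text \<open>Selection matrix: rows are the unit vectors e_i for i in T, i < K, in increasing
  order; so sel K T *v W is the subvector of W indexed by T.\<close>
definition sel :: "nat \<Rightarrow> nat set \<Rightarrow> real mat" where
  "sel K T = submatrix (1\<^sub>m K) T UNIV"

definition minv :: "real mat \<Rightarrow> real mat" where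
  "minv A = (1 / det A) \<cdot>\<^sub>m adj_mat A"

text \<open>delta_resid(S) for the selection set T = {i. S_i = 1}. With W1 = P1 W, W2 = P2 W:
  var(W1) = P1 Sig P1', cov(W2,W1) = P2 Sig P1'.
  gamma2' W2^{perp W1} = a' W with a = (P2 - cov(W2,W1) var(W1)^-1 P1)' gamma2;
  gamma1' W1 + gamma2' L(W2|1,W1) = b' W + const with
  b = P1' gamma1 + (cov(W2,W1) var(W1)^-1 P1)' gamma2 (constants do not affect cov/var).\<close>
definition delta_resid :: "real mat \<Rightarrow> real vec \<Rightarrow> real vec \<Rightarrow> nat set \<Rightarrow> real" where
  "delta_resid Sig p g T =
    (let K = dim_row Sig;
         P1 = sel K T; P2 = sel K (- T);
         S11 = P1 * Sig * transpose_mat P1;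
         S21 = P2 * Sig * transpose_mat P1;
         g1 = P1 *\<^sub>v g; g2 = P2 *\<^sub>v g;
         B = S21 * minv S11 * P1;
         a = transpose_mat (P2 - B) *\<^sub>v g2;
         b = transpose_mat P1 *\<^sub>v g1 + transpose_mat B *\<^sub>v g2
     in (p \<bullet> (Sig *\<^sub>v a) / (a \<bullet> (Sig *\<^sub>v a))) / (p \<bullet> (Sig *\<^sub>v b) / (b \<bullet> (Sig *\<^sub>v b))))"

definition S_dist :: "nat \<Rightarrow> nat \<Rightarrow> nat set pmf" where
  "S_dist K d1 = pmf_of_set {T. T \<subseteq> {..<K} \<and> card T = d1}"

definition block_var :: "real mat \<Rightarrow> real vec \<Rightarrow> nat set \<Rightarrow> real" where
  "block_var Sig p T = (\<Sum>i\<in>T. \<Sum>j\<in>T. p $ i * p $ j * Sig $$ (i, j))"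

end

theory Submission
  imports Defs
begin

lemma sel_dim: "dim_row (sel K I) = card {i. i < K \<and> i \<in> I}" "dim_col (sel K I) = K"
  unfolding sel_def dim_submatrix by auto

lemma sel_carrier: "sel K I \<in> carrier_mat (card {i. i < K \<and> i \<in> I}) K"
  unfolding carrier_mat_def using sel_dim by blast

lemma pick_lt:
  assumes "i < card {i. i < K \<and> i \<in> I}" shows "pick I i < K"
  using pick_le[of i K I] assms by (simp add: conj_commute)

lemma pick_in:
  assumes "i < card {i. i < K \<and> i \<in> I}" shows "pick I i \<in> I"
proof (cases "finite I")
  case True
  have "card {i. i < K \<and> i \<in> I} \<le> card I" using True by (intro card_mono) auto
  then show ?thesis using assms pick_in_set by auto
next
  case False then show ?thesis using pick_in_set by auto
qed
lemma pick_bij: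
  "bij_betw (pick I) {..<card {i. i < K \<and> i \<in> I}} {i. i < K \<and> i \<in> I}"
proof -
  let ?n = "card {i. i < K \<and> i \<in> I}"
  have inj: "inj_on (pick I) {..<?n}"
  proof (rule inj_onI)
    fix x y assume x: "x \<in> {..<?n}" and y: "y \<in> {..<?n}" and e: "pick I x = pick I y"
    have fin: "?n \<le> card I \<or> infinite I"
    proof (cases "finite I")
      case True then show ?thesis by (intro disjI1 card_mono) auto
    qed simp
    show "x = y"
    proof (rule ccontr)
      assume "x \<noteq> y"
      then have "x < y \<or> y < x" by auto
      then show False
      proof
        assume "x < y" then have "pick I x < pick I y" using pick_mono[of y I x] y fin by auto
        then show False using e by simp
      next
        assume "y < x" then have "pick I y < pick I x" using pick_mono[of x I y] x fin by auto
        then show False using e by simp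
      qed
    qed
  qed
  have sub: "pick I ` {..<?n} \<subseteq> {i. i < K \<and> i \<in> I}"
    using pick_lt pick_in by auto
  have "card (pick I ` {..<?n}) = ?n" using card_image[OF inj] by simp
  then have "pick I ` {..<?n} = {i. i < K \<and> i \<in> I}"
    by (intro card_subset_eq sub) auto
  then show ?thesis using inj unfolding bij_betw_def by simp
qed

lemma sum_pick:
  "(\<Sum>i<card {i. i < K \<and> i \<in> I}. h (pick I i)) = (\<Sum>k\<in>{i. i < K \<and> i \<in> I}. h k)"
  using sum.reindex_bij_betw[OF pick_bij, of h] by simp

lemma sel_index:
  assumes "i < card {i. i < K \<and> i \<in> I}" "k < K"
  shows "sel K I $$ (i, k) = (if pick I i = k then 1 else 0)"
proof -
  have "sel K I $$ (i, k) = 1\<^sub>m K $$ (pick I i, pick UNIV k)"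
    unfolding sel_def using assms by (intro submatrix_index) auto
  also have "\<dots> = (if pick I i = k then 1 else 0)"
    using pick_lt[OF assms(1)] assms(2) by (simp add: pick_UNIV)
  finally show ?thesis .
qed

lemma row_sel_scalar:
  assumes "i < card {i. i < K \<and> i \<in> I}" "x \<in> carrier_vec K"
  shows "row (sel K I) i \<bullet> x = x $ pick I i"
proof -
  have "row (sel K I) i \<bullet> x = (\<Sum>k<K. (if pick I i = k then 1 else 0) * x $ k)"
    unfolding scalar_prod_def using assms sel_dim sel_index[OF assms(1)]
    by (auto intro!: sum.cong simp: lessThan_atLeast0)
  also have "\<dots> = (\<Sum>k<K. (if pick I i = k then x $ k else 0))"
    by (intro sum.cong) auto
  also have "\<dots> = x $ pick I i" using pick_lt[OF assms(1)]
    by (simp add: sum.delta)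
  finally show ?thesis .
qed

lemma sel_mult_vec:
  assumes "x \<in> carrier_vec K"
  shows "sel K I *\<^sub>v x = vec (card {i. i < K \<and> i \<in> I}) (\<lambda>i. x $ pick I i)"
  using assms row_sel_scalar sel_dim by (auto simp: mult_mat_vec_def)

lemma sel_mult_mat:
  assumes "A \<in> carrier_mat K m"
  shows "sel K I * A = mat (card {i. i < K \<and> i \<in> I}) m (\<lambda>(i,k). A $$ (pick I i, k))"
proof (rule eq_matI)
  fix i k assume "i < dim_row (mat (card {i. i < K \<and> i \<in> I}) m (\<lambda>(i,k). A $$ (pick I i, k)))"
    "k < dim_col (mat (card {i. i < K \<and> i \<in> I}) m (\<lambda>(i,k). A $$ (pick I i, k)))"
  then have ik: "i < card {i. i < K \<and> i \<in> I}" "k < m" by auto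
  have "(sel K I * A) $$ (i, k) = row (sel K I) i \<bullet> col A k"
    using ik assms sel_dim by simp
  also have "\<dots> = col A k $ pick I i" using row_sel_scalar[OF ik(1)] assms ik by auto
  also have "\<dots> = A $$ (pick I i, k)" using assms ik pick_lt[OF ik(1)] by simp
  finally show "(sel K I * A) $$ (i, k) = mat (card {i. i < K \<and> i \<in> I}) m (\<lambda>(i,k). A $$ (pick I i, k)) $$ (i, k)"
    using ik by simp
qed (use assms sel_dim in simp_all)

lemma mult_sel_T:
  assumes "A \<in> carrier_mat m K"
  shows "A * transpose_mat (sel K J) = mat m (card {i. i < K \<and> i \<in> J}) (\<lambda>(k,j). A $$ (k, pick J j))"
proof (rule eq_matI)
  fix k j assume "k < dim_row (mat m (card {i. i < K \<and> i \<in> J}) (\<lambda>(k,j). A $$ (k, pick J j)))"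
    "j < dim_col (mat m (card {i. i < K \<and> i \<in> J}) (\<lambda>(k,j). A $$ (k, pick J j)))"
  then have kj: "k < m" "j < card {i. i < K \<and> i \<in> J}" by auto
  have "(A * transpose_mat (sel K J)) $$ (k, j) = row A k \<bullet> row (sel K J) j"
    using kj assms sel_dim by simp
  also have "\<dots> = row (sel K J) j \<bullet> row A k"
  proof -
    have r1: "row (sel K J) j \<in> carrier_vec K" using row_carrier[of "sel K J" j] sel_dim(2)[of K J] by simp
    have r2: "row A k \<in> carrier_vec K" using row_carrier[of A k] assms by simp
    show ?thesis by (rule comm_scalar_prod[OF r2 r1])
  qed
  also have "\<dots> = A $$ (k, pick J j)" using row_sel_scalar[OF kj(2)] assms kj pick_lt[OF kj(2)] by auto
  finally show "(A * transpose_mat (sel K J)) $$ (k, j) = mat m (card {i. i < K \<and> i \<in> J}) (\<lambda>(k,j). A $$ (k, pick J j)) $$ (k, j)"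
    using kj by simp
qed (use assms sel_dim in simp_all)

lemma transpose_sel_vec:
  "transpose_mat (sel K I) *\<^sub>v vec (card {i. i < K \<and> i \<in> I}) (\<lambda>i. h (pick I i))
     = vec K (\<lambda>k. if k \<in> I then h k else 0)"
proof (rule eq_vecI)
  fix k assume "k < dim_vec (vec K (\<lambda>k. if k \<in> I then h k else 0))"
  then have k: "k < K" by simp
  let ?n = "card {i. i < K \<and> i \<in> I}"
  have "(transpose_mat (sel K I) *\<^sub>v vec ?n (\<lambda>i. h (pick I i))) $ k
      = col (sel K I) k \<bullet> vec ?n (\<lambda>i. h (pick I i))"
    using k sel_dim by simp
  also have "\<dots> = (\<Sum>i<?n. (if pick I i = k then 1 else 0) * h (pick I i))"
    unfolding scalar_prod_def using k sel_dim sel_index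
    by (auto intro!: sum.cong simp: lessThan_atLeast0)
  also have "\<dots> = (\<Sum>j\<in>{i. i < K \<and> i \<in> I}. (if j = k then 1 else 0) * h j)"
    by (rule sum_pick)
  also have "\<dots> = (\<Sum>j\<in>{i. i < K \<and> i \<in> I}. (if j = k then h k else 0))"
    by (intro sum.cong) auto
  also have "\<dots> = (if k \<in> I then h k else 0)" using k
    by (simp add: sum.delta)
  finally show "(transpose_mat (sel K I) *\<^sub>v vec ?n (\<lambda>i. h (pick I i))) $ k = vec K (\<lambda>k. if k \<in> I then h k else 0) $ k"
    using k by simp
qed (simp add: sel_dim)

definition SigM :: "nat \<Rightarrow> real \<Rightarrow> real mat" where
  "SigM K \<rho> = mat K K (\<lambda>(i,j). (if i = j then 1 else 0) + \<rho>)"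

lemma card_T: "T \<subseteq> {..<K} \<Longrightarrow> card {i. i < K \<and> i \<in> T} = card T"
  by (rule arg_cong[where f=card]) auto

lemma set_U: "{i. i < K \<and> i \<in> - T} = {..<K} - T" by auto

lemma pick_inj_lt:
  assumes "i < card {i. i < K \<and> i \<in> I}" "j < card {i. i < K \<and> i \<in> I}"
  shows "(pick I i = pick I j) = (i = j)"
  using pick_bij[of I K] assms unfolding bij_betw_def inj_on_def by auto

lemma S11_eq:
  fixes K :: nat and T :: "nat set"
  shows "sel K T * SigM K \<rho> * transpose_mat (sel K T) = mat (card {i. i < K \<and> i \<in> T}) (card {i. i < K \<and> i \<in> T}) (\<lambda>(i,j). (if i = j then 1 else 0) + \<rho>)"
proof -
  let ?n1 = "card {i. i < K \<and> i \<in> T}"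
  have Sc: "SigM K \<rho> \<in> carrier_mat K K" unfolding SigM_def by simp
  have A: "sel K T * SigM K \<rho> \<in> carrier_mat ?n1 K" using sel_carrier[of K T] Sc by simp
  have "sel K T * SigM K \<rho> * transpose_mat (sel K T) = mat ?n1 ?n1 (\<lambda>(k,j). (sel K T * SigM K \<rho>) $$ (k, pick T j))"
    by (rule mult_sel_T[OF A])
  also have "\<dots> = mat ?n1 ?n1 (\<lambda>(i,j). (if i = j then 1 else 0) + \<rho>)"
  proof (rule eq_matI)
    fix i j assume "i < dim_row (mat ?n1 ?n1 (\<lambda>(i,j). (if i = j then 1 else 0) + \<rho>))"
       "j < dim_col (mat ?n1 ?n1 (\<lambda>(i,j). (if i = j then 1 else 0) + \<rho>))"
    then have ij: "i < ?n1" "j < ?n1" by auto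
    have lt: "pick T i < K" "pick T j < K" using pick_lt ij by auto
    have "(sel K T * SigM K \<rho>) $$ (i, pick T j) = SigM K \<rho> $$ (pick T i, pick T j)"
      using sel_mult_mat[OF Sc, of T] ij lt by simp
    also have "\<dots> = (if i = j then 1 else 0) + \<rho>"
      using lt pick_inj_lt[OF ij] unfolding SigM_def by simp
    finally show "mat ?n1 ?n1 (\<lambda>(k,j). (sel K T * SigM K \<rho>) $$ (k, pick T j)) $$ (i, j)
        = mat ?n1 ?n1 (\<lambda>(i,j). (if i = j then 1 else 0) + \<rho>) $$ (i, j)"
      using ij by simp
  qed simp_all
  finally show ?thesis .
qed

lemma S21_eq:
  fixes K :: nat and T :: "nat set"
  shows "sel K (- T) * SigM K \<rho> * transpose_mat (sel K T) = mat (card {i. i < K \<and> i \<in> - T}) (card {i. i < K \<and> i \<in> T}) (\<lambda>_. \<rho>)"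
proof -
  let ?n1 = "card {i. i < K \<and> i \<in> T}"
  let ?n2 = "card {i. i < K \<and> i \<in> - T}"
  have Sc: "SigM K \<rho> \<in> carrier_mat K K" unfolding SigM_def by simp
  have A: "sel K (-T) * SigM K \<rho> \<in> carrier_mat ?n2 K" using sel_carrier[of K "-T"] Sc by simp
  have "sel K (-T) * SigM K \<rho> * transpose_mat (sel K T) = mat ?n2 ?n1 (\<lambda>(k,j). (sel K (-T) * SigM K \<rho>) $$ (k, pick T j))"
    by (rule mult_sel_T[OF A])
  also have "\<dots> = mat ?n2 ?n1 (\<lambda>_. \<rho>)"
  proof (rule eq_matI)
    fix i j assume "i < dim_row (mat ?n2 ?n1 (\<lambda>(_::nat\<times>nat). \<rho>))" "j < dim_col (mat ?n2 ?n1 (\<lambda>(_::nat\<times>nat). \<rho>))"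
    then have ij: "i < ?n2" "j < ?n1" by auto
    have lt: "pick (-T) i < K" "pick T j < K" using pick_lt ij by auto
    have ne: "pick (-T) i \<noteq> pick T j"
      using pick_in[of i K "-T"] pick_in[of j K T] ij by auto
    have "(sel K (-T) * SigM K \<rho>) $$ (i, pick T j) = SigM K \<rho> $$ (pick (-T) i, pick T j)"
      using sel_mult_mat[OF Sc, of "-T"] ij lt by simp
    also have "\<dots> = \<rho>" using lt ne unfolding SigM_def by simp
    finally show "mat ?n2 ?n1 (\<lambda>(k,j). (sel K (-T) * SigM K \<rho>) $$ (k, pick T j)) $$ (i, j)
        = mat ?n2 ?n1 (\<lambda>(_::nat\<times>nat). \<rho>) $$ (i, j)"
      using ij by simp
  qed simp_all
  finally show ?thesis .
qed

lemma sum_if_eq: "j < (n::nat) \<Longrightarrow> (\<Sum>l<n. f l * ((if l = j then 1 else 0) + (c::real))) = f j + c * (\<Sum>l<n. f l)"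
proof -
  assume j: "j < n"
  have "(\<Sum>l<n. f l * ((if l = j then 1 else 0) + c)) = (\<Sum>l<n. (if l = j then f l else 0) + c * f l)"
    by (intro sum.cong) (auto simp: algebra_simps)
  also have "\<dots> = (\<Sum>l<n. (if l = j then f l else 0)) + (\<Sum>l<n. c * f l)"
    by (rule sum.distrib)
  also have "\<dots> = f j + c * (\<Sum>l<n. f l)" using j by (simp add: sum.delta sum_distrib_left)
  finally show ?thesis .
qed

lemma inv_S11:
  fixes n m :: nat
  assumes "\<rho> \<ge> 0"
  defines "S \<equiv> mat n n (\<lambda>(i,j). (if i = j then 1 else 0) + \<rho>)"
  shows "S * minv S = 1\<^sub>m n" "mat m n (\<lambda>_. \<rho> / (1 + \<rho> * n)) * S = mat m n (\<lambda>_. \<rho>)"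
proof -
  have s: "1 + \<rho> * n > 0" using assms by (simp add: add_pos_nonneg)
  have Sc: "S \<in> carrier_mat n n" unfolding S_def by simp
  define N where "N = mat n n (\<lambda>(i,j). (if i = j then 1 else 0) - \<rho> / (1 + \<rho> * n))"
  have Nc: "N \<in> carrier_mat n n" unfolding N_def by simp
  have "N * S = 1\<^sub>m n"
  proof (rule eq_matI)
    fix i j assume "i < dim_row (1\<^sub>m n :: real mat)" "j < dim_col (1\<^sub>m n :: real mat)"
    then have ij: "i < n" "j < n" by auto
    have "(N * S) $$ (i, j) = row N i \<bullet> col S j" using ij Nc Sc by simp
    also have "\<dots> = (\<Sum>l<n. N $$ (i,l) * ((if l = j then 1 else 0) + \<rho>))"
      unfolding scalar_prod_def using ij Nc Sc unfolding S_def by (auto simp: lessThan_atLeast0 intro!: sum.cong)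
    also have "\<dots> = N $$ (i,j) + \<rho> * (\<Sum>l<n. N $$ (i,l))" by (rule sum_if_eq[OF ij(2)])
    also have "(\<Sum>l<n. N $$ (i,l)) = (\<Sum>l<n. (if l = i then 1 else 0) - \<rho> / (1 + \<rho> * n))"
      unfolding N_def using ij by (intro sum.cong) auto
    also have "\<dots> = 1 - n * (\<rho> / (1 + \<rho> * n))" using ij by (simp add: sum_subtractf sum.delta)
    finally have "(N * S) $$ (i, j) = N $$ (i,j) + \<rho> * (1 - n * (\<rho> / (1 + \<rho> * n)))" .
    also have "\<rho> * (1 - n * (\<rho> / (1 + \<rho> * n))) = \<rho> / (1 + \<rho> * n)"
      using s by (simp add: field_simps)
    finally show "(N * S) $$ (i, j) = 1\<^sub>m n $$ (i, j)" using ij unfolding N_def by simp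
  qed (use Nc Sc in auto)
  then have "det N * det S = 1" using det_mult[OF Nc Sc] by simp
  then have d: "det S \<noteq> 0" by auto
  have "S * minv S = (1 / det S) \<cdot>\<^sub>m (S * adj_mat S)"
    unfolding minv_def using mult_smult_distrib[OF Sc adj_mat(1)[OF Sc]] by simp
  also have "\<dots> = 1\<^sub>m n" unfolding adj_mat(2)[OF Sc] using d by (intro eq_matI) auto
  finally show "S * minv S = 1\<^sub>m n" .
  show "mat m n (\<lambda>_. \<rho> / (1 + \<rho> * n)) * S = mat m n (\<lambda>_. \<rho>)"
  proof (rule eq_matI)
    fix i j assume "i < dim_row (mat m n (\<lambda>_. \<rho>))" "j < dim_col (mat m n (\<lambda>_. \<rho>))"
    then have ij: "i < m" "j < n" by auto
    have "(mat m n (\<lambda>_. \<rho> / (1 + \<rho> * n)) * S) $$ (i, j) = row (mat m n (\<lambda>_. \<rho> / (1 + \<rho> * n))) i \<bullet> col S j" using ij Sc by simp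
    also have "\<dots> = (\<Sum>l<n. (\<rho> / (1 + \<rho> * n)) * ((if l = j then 1 else 0) + \<rho>))"
      unfolding scalar_prod_def using ij Sc unfolding S_def by (auto simp: lessThan_atLeast0 intro!: sum.cong)
    also have "\<dots> = \<rho> / (1 + \<rho> * n) + \<rho> * (\<Sum>l<n. \<rho> / (1 + \<rho> * n))" by (rule sum_if_eq[OF ij(2)])
    also have "\<dots> = \<rho> / (1 + \<rho> * n) * (1 + \<rho> * n)" by (simp add: algebra_simps add_divide_distrib[symmetric])
    also have "\<dots> = \<rho>" using s by simp
    finally show "(mat m n (\<lambda>_. \<rho> / (1 + \<rho> * n)) * S) $$ (i, j) = mat m n (\<lambda>_. \<rho>) $$ (i, j)" using ij by simp
  qed (use Sc in auto)
qed

lemma ab_eq: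
  fixes K :: nat and T :: "nat set" and g :: "real vec"
  assumes T: "T \<subseteq> {..<K}" and rho: "\<rho> \<ge> 0" and g: "g \<in> carrier_vec K"
  defines "P1 \<equiv> sel K T" and "P2 \<equiv> sel K (- T)"
  defines "B \<equiv> (P2 * SigM K \<rho> * transpose_mat P1) * minv (P1 * SigM K \<rho> * transpose_mat P1) * P1"
  defines "\<kappa> \<equiv> \<rho> * (\<Sum>k\<in>{..<K} - T. g $ k) / (1 + \<rho> * card T)"
  shows "transpose_mat (P2 - B) *\<^sub>v (P2 *\<^sub>v g) = vec K (\<lambda>k. if k \<in> T then - \<kappa> else g $ k)"
    and "transpose_mat P1 *\<^sub>v (P1 *\<^sub>v g) + transpose_mat B *\<^sub>v (P2 *\<^sub>v g) = vec K (\<lambda>k. if k \<in> T then g $ k + \<kappa> else 0)"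
proof -
  let ?n1 = "card {i. i < K \<and> i \<in> T}"
  let ?n2 = "card {i. i < K \<and> i \<in> - T}"
  have n1: "?n1 = card T" using card_T[OF T] .
  have P1c: "P1 \<in> carrier_mat ?n1 K" unfolding P1_def by (rule sel_carrier)
  have P2c: "P2 \<in> carrier_mat ?n2 K" unfolding P2_def by (rule sel_carrier)
  define S where "S = mat ?n1 ?n1 (\<lambda>(i,j). (if i = j then 1 else 0) + \<rho>)"
  define M where "M = mat ?n2 ?n1 (\<lambda>_. \<rho> / (1 + \<rho> * ?n1))"
  have Sc: "S \<in> carrier_mat ?n1 ?n1" unfolding S_def by simp
  have Mc: "M \<in> carrier_mat ?n2 ?n1" unfolding M_def by simp
  have S11: "P1 * SigM K \<rho> * transpose_mat P1 = S" unfolding P1_def S_def by (rule S11_eq)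
  have S21: "P2 * SigM K \<rho> * transpose_mat P1 = M * S"
    unfolding P1_def P2_def S21_eq M_def S_def by (rule inv_S11(2)[OF rho, symmetric])
  have Sinv: "S * minv S = 1\<^sub>m ?n1" unfolding S_def by (rule inv_S11(1)[OF rho])
  have minvc: "minv S \<in> carrier_mat ?n1 ?n1" unfolding minv_def using adj_mat(1)[OF Sc] by simp
  have "M * S * minv S = M * (S * minv S)" using Mc Sc minvc by simp
  also have "\<dots> = M" using Sinv Mc by simp
  finally have MSM: "M * S * minv S = M" .
  have B: "B = M * P1" unfolding B_def S11 S21 MSM ..
  have Bc: "B \<in> carrier_mat ?n2 K" using B Mc P1c by simp
  have g2: "P2 *\<^sub>v g = vec ?n2 (\<lambda>i. g $ pick (- T) i)" unfolding P2_def by (rule sel_mult_vec[OF g])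
  have g1: "P1 *\<^sub>v g = vec ?n1 (\<lambda>i. g $ pick T i)" unfolding P1_def by (rule sel_mult_vec[OF g])
  have g2c: "P2 *\<^sub>v g \<in> carrier_vec ?n2" using P2c g by simp
  have sumg2: "(\<Sum>i<?n2. g $ pick (- T) i) = (\<Sum>k\<in>{..<K} - T. g $ k)"
    using sum_pick[where h="\<lambda>k. g $ k" and K=K and I="- T"] set_U[of K T] by simp
  have Mt: "transpose_mat M *\<^sub>v (P2 *\<^sub>v g) = vec ?n1 (\<lambda>i. (\<lambda>_. \<kappa>) (pick T i))"
  proof (rule eq_vecI)
    fix i assume "i < dim_vec (vec ?n1 (\<lambda>i. (\<lambda>_. \<kappa>) (pick T i)))"
    then have i: "i < ?n1" by simp
    have "(transpose_mat M *\<^sub>v (P2 *\<^sub>v g)) $ i = col M i \<bullet> (P2 *\<^sub>v g)" using i Mc by simp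
    also have "\<dots> = (\<Sum>j<?n2. \<rho> / (1 + \<rho> * ?n1) * g $ pick (- T) j)"
      unfolding scalar_prod_def g2 using i unfolding M_def by (auto simp: lessThan_atLeast0 intro!: sum.cong)
    also have "\<dots> = \<kappa>" unfolding \<kappa>_def n1 sum_distrib_left[symmetric] sumg2 by simp
    finally show "(transpose_mat M *\<^sub>v (P2 *\<^sub>v g)) $ i = vec ?n1 (\<lambda>i. (\<lambda>_. \<kappa>) (pick T i)) $ i" using i by simp
  qed (use Mc in simp)
  have tB: "transpose_mat B *\<^sub>v (P2 *\<^sub>v g) = vec K (\<lambda>k. if k \<in> T then \<kappa> else 0)"
  proof -
    have "transpose_mat B = transpose_mat P1 * transpose_mat M" unfolding B using transpose_mult[OF Mc P1c] .
    then have "transpose_mat B *\<^sub>v (P2 *\<^sub>v g) = transpose_mat P1 *\<^sub>v (transpose_mat M *\<^sub>v (P2 *\<^sub>v g))"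
      using P1c Mc g2c by simp
    also have "\<dots> = vec K (\<lambda>k. if k \<in> T then \<kappa> else 0)" unfolding Mt unfolding P1_def by (rule transpose_sel_vec)
    finally show ?thesis .
  qed
  have tP2: "transpose_mat P2 *\<^sub>v (P2 *\<^sub>v g) = vec K (\<lambda>k. if k \<in> - T then g $ k else 0)"
    unfolding g2 unfolding P2_def by (rule transpose_sel_vec)
  have tP1: "transpose_mat P1 *\<^sub>v (P1 *\<^sub>v g) = vec K (\<lambda>k. if k \<in> T then g $ k else 0)"
    unfolding g1 unfolding P1_def by (rule transpose_sel_vec)
  have "transpose_mat (P2 - B) *\<^sub>v (P2 *\<^sub>v g) = (transpose_mat P2 - transpose_mat B) *\<^sub>v (P2 *\<^sub>v g)"
    using transpose_minus[OF P2c Bc] by simp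
  also have "\<dots> = transpose_mat P2 *\<^sub>v (P2 *\<^sub>v g) - transpose_mat B *\<^sub>v (P2 *\<^sub>v g)"
    using P2c Bc g2c by (intro minus_mult_distrib_mat_vec) auto
  also have "\<dots> = vec K (\<lambda>k. if k \<in> T then - \<kappa> else g $ k)"
    unfolding tP2 tB by (intro eq_vecI) auto
  finally show "transpose_mat (P2 - B) *\<^sub>v (P2 *\<^sub>v g) = vec K (\<lambda>k. if k \<in> T then - \<kappa> else g $ k)" .
  show "transpose_mat P1 *\<^sub>v (P1 *\<^sub>v g) + transpose_mat B *\<^sub>v (P2 *\<^sub>v g) = vec K (\<lambda>k. if k \<in> T then g $ k + \<kappa> else 0)"
    unfolding tP1 tB by (intro eq_vecI) auto
qed

definition dform :: "real \<Rightarrow> real \<Rightarrow> real \<Rightarrow> real \<Rightarrow> real \<Rightarrow> real \<Rightarrow> real \<Rightarrow> real \<Rightarrow> real \<Rightarrow> real \<Rightarrow> real" where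
  "dform \<rho> d1 P1 P G1 G2 R1 R2 Q1 Q2 = (let \<kappa> = \<rho> * G2 / (1 + \<rho> * d1) in
     ((R2 - \<kappa> * P1 + \<rho> * P * (G2 - \<kappa> * d1)) / (Q2 + \<kappa>^2 * d1 + \<rho> * (G2 - \<kappa> * d1)^2)) /
     ((R1 + \<kappa> * P1 + \<rho> * P * (G1 + \<kappa> * d1)) / (Q1 + 2 * \<kappa> * G1 + \<kappa>^2 * d1 + \<rho> * (G1 + \<kappa> * d1)^2)))"

lemma sum_split_T:
  fixes f h :: "nat \<Rightarrow> real"
  assumes "T \<subseteq> {..<K}"
  shows "(\<Sum>k<K. if k \<in> T then f k else h k) = (\<Sum>k\<in>T. f k) + (\<Sum>k\<in>{..<K} - T. h k)"
proof -
  have e1: "{..<K} \<inter> {x. x \<in> T} = T" using assms by auto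
  have e2: "{..<K} \<inter> - {x. x \<in> T} = {..<K} - T" by auto
  show ?thesis using sum.If_cases[of "{..<K}" "\<lambda>k. k \<in> T" f h] unfolding e1 e2 by simp
qed

lemma sig_vec:
  assumes "x \<in> carrier_vec K"
  shows "SigM K \<rho> *\<^sub>v x = vec K (\<lambda>i. x $ i + \<rho> * (\<Sum>j<K. x $ j))"
proof (rule eq_vecI)
  fix i assume "i < dim_vec (vec K (\<lambda>i. x $ i + \<rho> * (\<Sum>j<K. x $ j)))"
  then have i: "i < K" by simp
  have "(SigM K \<rho> *\<^sub>v x) $ i = (\<Sum>j<K. ((if i = j then 1 else 0) + \<rho>) * x $ j)"
    unfolding SigM_def mult_mat_vec_def scalar_prod_def using i assms
    by (auto simp: lessThan_atLeast0 intro!: sum.cong)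
  also have "\<dots> = (\<Sum>j<K. (if i = j then x $ j else 0) + \<rho> * x $ j)"
    by (intro sum.cong) (auto simp: algebra_simps)
  also have "\<dots> = x $ i + \<rho> * (\<Sum>j<K. x $ j)" using i by (simp add: sum.distrib sum.delta sum_distrib_left)
  finally show "(SigM K \<rho> *\<^sub>v x) $ i = vec K (\<lambda>i. x $ i + \<rho> * (\<Sum>j<K. x $ j)) $ i" using i by simp
qed (simp add: SigM_def)

lemma scal_vec: "p \<in> carrier_vec K \<Longrightarrow> p \<bullet> vec K f = (\<Sum>i<K. p $ i * f i)"
  unfolding scalar_prod_def by (auto simp: lessThan_atLeast0 intro!: sum.cong)

lemma delta_formula:
  fixes K :: nat and T :: "nat set" and g p :: "real vec"
  assumes T: "T \<subseteq> {..<K}" and rho: "\<rho> \<ge> 0" and g: "g \<in> carrier_vec K" and p: "p \<in> carrier_vec K"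
  shows "delta_resid (SigM K \<rho>) p g T = dform \<rho> (card T) (\<Sum>i\<in>T. p $ i) (\<Sum>i<K. p $ i)
     (\<Sum>i\<in>T. g $ i) (\<Sum>i\<in>{..<K} - T. g $ i) (\<Sum>i\<in>T. p $ i * g $ i) (\<Sum>i\<in>{..<K} - T. p $ i * g $ i)
     (\<Sum>i\<in>T. (g $ i)^2) (\<Sum>i\<in>{..<K} - T. (g $ i)^2)"
proof -
  define U where "U = {..<K} - T"
  define d1 where "d1 = real (card T)"
  define P1 where "P1 = (\<Sum>i\<in>T. p $ i)"
  define P where "P = (\<Sum>i<K. p $ i)"
  define G1 where "G1 = (\<Sum>i\<in>T. g $ i)"
  define G2 where "G2 = (\<Sum>i\<in>U. g $ i)"
  define R1 where "R1 = (\<Sum>i\<in>T. p $ i * g $ i)"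
  define R2 where "R2 = (\<Sum>i\<in>U. p $ i * g $ i)"
  define Q1 where "Q1 = (\<Sum>i\<in>T. (g $ i)^2)"
  define Q2 where "Q2 = (\<Sum>i\<in>U. (g $ i)^2)"
  define \<kappa> where "\<kappa> = \<rho> * G2 / (1 + \<rho> * d1)"
  define a where "a = vec K (\<lambda>k. if k \<in> T then - \<kappa> else g $ k)"
  define b where "b = vec K (\<lambda>k. if k \<in> T then g $ k + \<kappa> else 0)"
  have ab: "transpose_mat (sel K (- T) - (sel K (- T) * SigM K \<rho> * transpose_mat (sel K T)) * minv (sel K T * SigM K \<rho> * transpose_mat (sel K T)) * sel K T) *\<^sub>v (sel K (- T) *\<^sub>v g) = a"
     "transpose_mat (sel K T) *\<^sub>v (sel K T *\<^sub>v g) + transpose_mat ((sel K (- T) * SigM K \<rho> * transpose_mat (sel K T)) * minv (sel K T * SigM K \<rho> * transpose_mat (sel K T)) * sel K T) *\<^sub>v (sel K (- T) *\<^sub>v g) = b"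
    unfolding a_def b_def \<kappa>_def G2_def U_def d1_def using ab_eq[OF T rho g] by simp_all
  have dimS: "dim_row (SigM K \<rho>) = K" unfolding SigM_def by simp
  have ac: "a \<in> carrier_vec K" and bc: "b \<in> carrier_vec K" unfolding a_def b_def by auto
  have sa: "(\<Sum>j<K. a $ j) = G2 - \<kappa> * d1"
  proof -
    have "(\<Sum>j<K. a $ j) = (\<Sum>j<K. if j \<in> T then - \<kappa> else g $ j)" unfolding a_def by (intro sum.cong) auto
    also have "\<dots> = G2 - \<kappa> * d1" unfolding sum_split_T[OF T] G2_def U_def d1_def by simp
    finally show ?thesis .
  qed
  have sb: "(\<Sum>j<K. b $ j) = G1 + \<kappa> * d1"
  proof -
    have "(\<Sum>j<K. b $ j) = (\<Sum>j<K. if j \<in> T then g $ j + \<kappa> else 0)" unfolding b_def by (intro sum.cong) auto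
    also have "\<dots> = G1 + \<kappa> * d1" unfolding sum_split_T[OF T] G1_def d1_def by (simp add: sum.distrib)
    finally show ?thesis .
  qed
  have pa: "p \<bullet> (SigM K \<rho> *\<^sub>v a) = R2 - \<kappa> * P1 + \<rho> * P * (G2 - \<kappa> * d1)"
  proof -
    have "p \<bullet> (SigM K \<rho> *\<^sub>v a) = (\<Sum>i<K. p $ i * (a $ i + \<rho> * (G2 - \<kappa> * d1)))"
      unfolding sig_vec[OF ac] sa using scal_vec[OF p] by simp
    also have "\<dots> = (\<Sum>i<K. p $ i * a $ i + (\<rho> * (G2 - \<kappa> * d1)) * p $ i)"
      by (intro sum.cong) (auto simp: algebra_simps)
    also have "\<dots> = (\<Sum>i<K. p $ i * a $ i) + \<rho> * P * (G2 - \<kappa> * d1)"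
      unfolding P_def by (simp add: sum.distrib sum_distrib_left[symmetric])
    also have "(\<Sum>i<K. p $ i * a $ i) = (\<Sum>i<K. if i \<in> T then p $ i * (- \<kappa>) else p $ i * g $ i)"
      unfolding a_def by (intro sum.cong) (auto simp: algebra_simps)
    also have "(\<Sum>i<K. if i \<in> T then p $ i * (- \<kappa>) else p $ i * g $ i) = R2 - \<kappa> * P1" unfolding sum_split_T[OF T] R2_def U_def P1_def by (simp add: sum_distrib_left[symmetric] sum_negf mult.commute)
    finally show ?thesis by simp
  qed
  have aa: "a \<bullet> (SigM K \<rho> *\<^sub>v a) = Q2 + \<kappa>^2 * d1 + \<rho> * (G2 - \<kappa> * d1)^2"
  proof -
    have "a \<bullet> (SigM K \<rho> *\<^sub>v a) = (\<Sum>i<K. a $ i * (a $ i + \<rho> * (G2 - \<kappa> * d1)))"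
      unfolding sig_vec[OF ac] sa using scal_vec[OF ac] by simp
    also have "\<dots> = (\<Sum>i<K. (a $ i)^2 + \<rho> * (G2 - \<kappa> * d1) * a $ i)"
      by (intro sum.cong) (auto simp: algebra_simps power2_eq_square)
    also have "\<dots> = (\<Sum>i<K. (a $ i)^2) + \<rho> * (G2 - \<kappa> * d1) * (\<Sum>i<K. a $ i)"
      by (simp add: sum.distrib sum_distrib_left)
    also have "(\<Sum>i<K. (a $ i)^2) = (\<Sum>i<K. if i \<in> T then \<kappa>^2 else (g $ i)^2)"
      unfolding a_def by (intro sum.cong) auto
    also have "\<dots> = Q2 + \<kappa>^2 * d1" unfolding sum_split_T[OF T] Q2_def U_def d1_def by simp
    finally show ?thesis unfolding sa by (simp add: power2_eq_square)
  qed
  have pb: "p \<bullet> (SigM K \<rho> *\<^sub>v b) = R1 + \<kappa> * P1 + \<rho> * P * (G1 + \<kappa> * d1)"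
  proof -
    have "p \<bullet> (SigM K \<rho> *\<^sub>v b) = (\<Sum>i<K. p $ i * (b $ i + \<rho> * (G1 + \<kappa> * d1)))"
      unfolding sig_vec[OF bc] sb using scal_vec[OF p] by simp
    also have "\<dots> = (\<Sum>i<K. p $ i * b $ i + (\<rho> * (G1 + \<kappa> * d1)) * p $ i)"
      by (intro sum.cong) (auto simp: algebra_simps)
    also have "\<dots> = (\<Sum>i<K. p $ i * b $ i) + \<rho> * P * (G1 + \<kappa> * d1)"
      unfolding P_def by (simp add: sum.distrib sum_distrib_left[symmetric])
    also have "(\<Sum>i<K. p $ i * b $ i) = (\<Sum>i<K. if i \<in> T then p $ i * g $ i + \<kappa> * p $ i else 0)"
      unfolding b_def by (intro sum.cong) (auto simp: algebra_simps)
    also have "(\<Sum>i<K. if i \<in> T then p $ i * g $ i + \<kappa> * p $ i else 0) = R1 + \<kappa> * P1" unfolding sum_split_T[OF T] R1_def P1_def by (simp add: sum.distrib sum_distrib_left)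
    finally show ?thesis by simp
  qed
  have bb: "b \<bullet> (SigM K \<rho> *\<^sub>v b) = Q1 + 2 * \<kappa> * G1 + \<kappa>^2 * d1 + \<rho> * (G1 + \<kappa> * d1)^2"
  proof -
    have "b \<bullet> (SigM K \<rho> *\<^sub>v b) = (\<Sum>i<K. b $ i * (b $ i + \<rho> * (G1 + \<kappa> * d1)))"
      unfolding sig_vec[OF bc] sb using scal_vec[OF bc] by simp
    also have "\<dots> = (\<Sum>i<K. (b $ i)^2 + \<rho> * (G1 + \<kappa> * d1) * b $ i)"
      by (intro sum.cong) (auto simp: algebra_simps power2_eq_square)
    also have "\<dots> = (\<Sum>i<K. (b $ i)^2) + \<rho> * (G1 + \<kappa> * d1) * (\<Sum>i<K. b $ i)"
      by (simp add: sum.distrib sum_distrib_left)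
    also have "(\<Sum>i<K. (b $ i)^2) = (\<Sum>i<K. if i \<in> T then (g $ i)^2 + 2 * \<kappa> * g $ i + \<kappa>^2 else 0)"
      unfolding b_def by (intro sum.cong) (auto simp: power2_eq_square algebra_simps)
    also have "\<dots> = Q1 + 2 * \<kappa> * G1 + \<kappa>^2 * d1" unfolding sum_split_T[OF T] Q1_def G1_def d1_def
      by (simp add: sum.distrib sum_distrib_left)
    finally show ?thesis unfolding sb by (simp add: power2_eq_square)
  qed
  show ?thesis
    unfolding delta_resid_def Let_def dimS ab pa aa pb bb
    unfolding dform_def Let_def \<kappa>_def[symmetric] d1_def[symmetric] P1_def[symmetric] P_def[symmetric]
      G1_def[symmetric] R1_def[symmetric] Q1_def[symmetric] U_def[symmetric] G2_def[symmetric]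
      R2_def[symmetric] Q2_def[symmetric] ..
qed

lemma dform_scale:
  fixes K :: real assumes K: "K > 0"
  shows "dform (1/K) (x*K) (sqrt K * a1) (sqrt K * a2) (K*b1) (K*b2) (sqrt K*c1) (sqrt K*c2) (K*e1) (K*e2)
       = dform 1 x a1 a2 b1 b2 c1 c2 e1 e2"
proof -
  define k where "k = b2 / (1 + x)"
  have kk: "1 / K * (K * b2) / (1 + 1 / K * (x * K)) = k" unfolding k_def using K by simp
  have sK: "sqrt K * sqrt K = K" using K by simp
  have n1: "sqrt K * c2 - k * (sqrt K * a1) + 1 / K * (sqrt K * a2) * (K * b2 - k * (x * K))
        = sqrt K * (c2 - k * a1 + 1 * a2 * (b2 - k * x))" using K by (simp add: algebra_simps)
  have d1: "K * e2 + k^2 * (x * K) + 1 / K * (K * b2 - k * (x * K))^2 = K * (e2 + k^2 * x + 1 * (b2 - k * x)^2)"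
    using K by (simp add: algebra_simps power2_eq_square)
  have n2: "sqrt K * c1 + k * (sqrt K * a1) + 1 / K * (sqrt K * a2) * (K * b1 + k * (x * K))
        = sqrt K * (c1 + k * a1 + 1 * a2 * (b1 + k * x))" using K by (simp add: algebra_simps)
  have d2: "K * e1 + 2 * k * (K * b1) + k^2 * (x * K) + 1 / K * (K * b1 + k * (x * K))^2
        = K * (e1 + 2 * k * b1 + k^2 * x + 1 * (b1 + k * x)^2)"
    using K by (simp add: algebra_simps power2_eq_square)
  have k1: "1 * b2 / (1 + 1 * x) = k" unfolding k_def by simp
  have fr: "\<And>A B C D. (sqrt K * A / (K * B)) / (sqrt K * C / (K * D)) = (A / B) / (C / D)"
  proof -
    fix A B C D :: real
    have "sqrt K * A / (K * B) = (sqrt K / K) * (A / B)" by simp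
    moreover have "sqrt K * C / (K * D) = (sqrt K / K) * (C / D)" by simp
    moreover have "sqrt K / K \<noteq> 0" using K by simp
    ultimately show "(sqrt K * A / (K * B)) / (sqrt K * C / (K * D)) = (A / B) / (C / D)" by simp
  qed
  show ?thesis unfolding dform_def Let_def kk k1 n1 d1 n2 d2 fr ..
qed

definition eps :: "nat \<Rightarrow> real" where "eps i = (-1) ^ i"

lemma eps_sq: "(eps i)^2 = 1" unfolding eps_def by (simp add: power_even_eq[symmetric] mult.commute power_mult[symmetric])

lemma eps_abs: "\<bar>eps i\<bar> = 1" unfolding eps_def by simp

definition EE :: "nat set \<Rightarrow> real" where "EE A = (\<Sum>i\<in>A. eps i)"

definition pv :: "real \<Rightarrow> real \<Rightarrow> nat \<Rightarrow> real vec" where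
  "pv a m K = vec K (\<lambda>i. (a + m * eps i) / sqrt K)"

definition gv :: "real \<Rightarrow> nat \<Rightarrow> real vec" where
  "gv l K = vec K (\<lambda>i. 1 + l * eps i)"

lemma sum_lin: "(\<Sum>i\<in>A. a + b * eps i) = a * card A + b * EE A"
  unfolding EE_def by (simp add: sum.distrib sum_distrib_left)

lemma sum_quad: "(\<Sum>i\<in>A. (a + b * eps i) * (c + d * eps i)) = (a * c + b * d) * card A + (a * d + b * c) * EE A"
proof -
  have "(\<Sum>i\<in>A. (a + b * eps i) * (c + d * eps i)) = (\<Sum>i\<in>A. (a * c + b * d) + (a * d + b * c) * eps i)"
  proof (intro sum.cong refl)
    fix i
    have "(a + b * eps i) * (c + d * eps i) = a * c + b * d * (eps i)^2 + (a * d + b * c) * eps i"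
      by (simp add: algebra_simps power2_eq_square)
    then show "(a + b * eps i) * (c + d * eps i) = (a * c + b * d) + (a * d + b * c) * eps i"
      using eps_sq[of i] by simp
  qed
  then show ?thesis by (simp add: sum_lin)
qed

definition Fz :: "real \<Rightarrow> real \<Rightarrow> real \<Rightarrow> real \<Rightarrow> real \<Rightarrow> real \<Rightarrow> real" where
  "Fz a m l x y1 y2 = dform 1 x (a * x + m * y1) (a + m * (y1 + y2)) (x + l * y1) ((1 - x) + l * y2)
     ((a + m * l) * x + (a * l + m) * y1) ((a + m * l) * (1 - x) + (a * l + m) * y2)
     ((1 + l^2) * x + 2 * l * y1) ((1 + l^2) * (1 - x) + 2 * l * y2)"

lemma delta_Fz:
  fixes K :: nat and T :: "nat set"
  assumes K: "K > 0" and T: "T \<subseteq> {..<K}"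
  shows "delta_resid (SigM K (1 / K)) (pv a m K) (gv l K) T
       = Fz a m l (card T / K) (EE T / K) (EE ({..<K} - T) / K)"
proof -
  define U where "U = {..<K} - T"
  have Kr: "real K > 0" using K by simp
  have cU: "real (card U) = real K - card T"
  proof -
    have fT: "finite T" using T finite_subset by blast
    have "card U = K - card T" unfolding U_def using card_Diff_subset[OF fT T] by simp
    moreover have "card T \<le> K" using card_mono[OF _ T] by simp
    ultimately show ?thesis by (simp add: of_nat_diff)
  qed
  have EU: "EE T + EE U = (\<Sum>i<K. eps i)"
  proof -
    have "{..<K} = T \<union> U" "T \<inter> U = {}" unfolding U_def using T by auto
    then show ?thesis unfolding EE_def by (metis finite_Un finite_lessThan sum.union_disjoint)
  qed
  have pc: "pv a m K \<in> carrier_vec K" and gc: "gv l K \<in> carrier_vec K" unfolding pv_def gv_def by auto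
  have sK: "sqrt (real K) * sqrt (real K) = real K" using Kr by simp
  have sq: "\<And>z. z / sqrt (real K) = sqrt (real K) * (z / real K)"
    using Kr by (simp add: field_simps)
  have onA: "\<And>A f. A \<subseteq> {..<K} \<Longrightarrow> (\<Sum>i\<in>A. f (pv a m K $ i) (gv l K $ i)) = (\<Sum>i\<in>A. f ((a + m * eps i) / sqrt K) (1 + l * eps i))"
    unfolding pv_def gv_def by (intro sum.cong) auto
  have TK: "T \<subseteq> {..<K}" and UK: "U \<subseteq> {..<K}" using T unfolding U_def by auto
  have s1: "(\<Sum>i\<in>T. pv a m K $ i) = sqrt K * (a * (card T / K) + m * (EE T / K))"
  proof -
    have "(\<Sum>i\<in>T. pv a m K $ i) = (\<Sum>i\<in>T. (a + m * eps i) / sqrt K)" using onA[OF TK, of "\<lambda>u v. u"] by simp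
    also have "\<dots> = (a * card T + m * EE T) / sqrt K" by (simp add: sum_divide_distrib[symmetric] sum_lin)
    also have "\<dots> = sqrt K * (a * (card T / K) + m * (EE T / K))" unfolding sq using Kr by (simp add: field_simps)
    finally show ?thesis .
  qed
  have s2: "(\<Sum>i<K. pv a m K $ i) = sqrt K * (a + m * (EE T / K + EE U / K))"
  proof -
    have "(\<Sum>i<K. pv a m K $ i) = (\<Sum>i<K. (a + m * eps i) / sqrt K)" using onA[of "{..<K}" "\<lambda>u v. u"] by simp
    also have "\<dots> = (a * K + m * (EE T + EE U)) / sqrt K"
      unfolding EU by (simp add: sum_divide_distrib[symmetric] sum.distrib sum_distrib_left)
    also have "\<dots> = sqrt K * (a + m * (EE T / K + EE U / K))" unfolding sq using Kr by (simp add: field_simps)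
    finally show ?thesis .
  qed
  have s3: "(\<Sum>i\<in>T. gv l K $ i) = K * (card T / K + l * (EE T / K))"
  proof -
    have "(\<Sum>i\<in>T. gv l K $ i) = (\<Sum>i\<in>T. 1 + l * eps i)" using onA[OF TK, of "\<lambda>u v. v"] by simp
    also have "\<dots> = card T + l * EE T" by (simp add: sum_lin)
    also have "\<dots> = K * (card T / K + l * (EE T / K))" using Kr by (simp add: field_simps)
    finally show ?thesis .
  qed
  have s4: "(\<Sum>i\<in>U. gv l K $ i) = K * ((1 - card T / K) + l * (EE U / K))"
  proof -
    have "(\<Sum>i\<in>U. gv l K $ i) = (\<Sum>i\<in>U. 1 + l * eps i)" using onA[OF UK, of "\<lambda>u v. v"] by simp
    also have "\<dots> = card U + l * EE U" by (simp add: sum_lin)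
    also have "\<dots> = K * ((1 - card T / K) + l * (EE U / K))" unfolding cU using Kr by (simp add: field_simps)
    finally show ?thesis .
  qed
  have s5: "(\<Sum>i\<in>T. pv a m K $ i * gv l K $ i) = sqrt K * ((a + m * l) * (card T / K) + (a * l + m) * (EE T / K))"
  proof -
    have "(\<Sum>i\<in>T. pv a m K $ i * gv l K $ i) = (\<Sum>i\<in>T. (a + m * eps i) * (1 + l * eps i)) / sqrt K"
      using onA[OF TK, of "\<lambda>u v. u * v"] by (simp add: sum_divide_distrib[symmetric])
    also have "\<dots> = ((a + m * l) * card T + (a * l + m) * EE T) / sqrt K" by (simp add: sum_quad)
    also have "\<dots> = sqrt K * ((a + m * l) * (card T / K) + (a * l + m) * (EE T / K))" unfolding sq using Kr by (simp add: field_simps)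
    finally show ?thesis .
  qed
  have s6: "(\<Sum>i\<in>U. pv a m K $ i * gv l K $ i) = sqrt K * ((a + m * l) * (1 - card T / K) + (a * l + m) * (EE U / K))"
  proof -
    have "(\<Sum>i\<in>U. pv a m K $ i * gv l K $ i) = (\<Sum>i\<in>U. (a + m * eps i) * (1 + l * eps i)) / sqrt K"
      using onA[OF UK, of "\<lambda>u v. u * v"] by (simp add: sum_divide_distrib[symmetric])
    also have "\<dots> = ((a + m * l) * card U + (a * l + m) * EE U) / sqrt K" by (simp add: sum_quad)
    also have "\<dots> = sqrt K * ((a + m * l) * (1 - card T / K) + (a * l + m) * (EE U / K))" unfolding sq cU using Kr by (simp add: field_simps)
    finally show ?thesis .
  qed
  have s7: "(\<Sum>i\<in>T. (gv l K $ i)^2) = K * ((1 + l^2) * (card T / K) + 2 * l * (EE T / K))"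
  proof -
    have "(\<Sum>i\<in>T. (gv l K $ i)^2) = (\<Sum>i\<in>T. (1 + l * eps i) * (1 + l * eps i))"
      using onA[OF TK, of "\<lambda>u v. v^2"] by (simp add: power2_eq_square)
    also have "\<dots> = (1 + l^2) * card T + 2 * l * EE T" by (simp add: sum_quad power2_eq_square)
    also have "\<dots> = K * ((1 + l^2) * (card T / K) + 2 * l * (EE T / K))" using Kr by (simp add: field_simps)
    finally show ?thesis .
  qed
  have s8: "(\<Sum>i\<in>U. (gv l K $ i)^2) = K * ((1 + l^2) * (1 - card T / K) + 2 * l * (EE U / K))"
  proof -
    have "(\<Sum>i\<in>U. (gv l K $ i)^2) = (\<Sum>i\<in>U. (1 + l * eps i) * (1 + l * eps i))"
      using onA[OF UK, of "\<lambda>u v. v^2"] by (simp add: power2_eq_square)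
    also have "\<dots> = (1 + l^2) * card U + 2 * l * EE U" by (simp add: sum_quad power2_eq_square)
    also have "\<dots> = K * ((1 + l^2) * (1 - card T / K) + 2 * l * (EE U / K))" unfolding cU using Kr by (simp add: field_simps)
    finally show ?thesis .
  qed
  have cT: "real (card T) = card T / K * K" using Kr by simp
  have "delta_resid (SigM K (1 / K)) (pv a m K) (gv l K) T = dform (1 / K) (card T) (\<Sum>i\<in>T. pv a m K $ i) (\<Sum>i<K. pv a m K $ i)
     (\<Sum>i\<in>T. gv l K $ i) (\<Sum>i\<in>U. gv l K $ i) (\<Sum>i\<in>T. pv a m K $ i * gv l K $ i) (\<Sum>i\<in>U. pv a m K $ i * gv l K $ i)
     (\<Sum>i\<in>T. (gv l K $ i)^2) (\<Sum>i\<in>U. (gv l K $ i)^2)"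
    unfolding U_def by (rule delta_formula[OF T _ gc pc]) simp
  also have "\<dots> = Fz a m l (card T / K) (EE T / K) (EE U / K)"
    unfolding s1 s2 s3 s4 s5 s6 s7 s8 Fz_def
    by (subst cT, rule dform_scale[OF Kr])
  finally show ?thesis unfolding U_def .
qed

lemma sum_eps_lt: "(\<Sum>i<K. eps i) = (if even K then 0 else 1)"
  by (induction K) (auto simp: eps_def)

lemma sum_eps_abs: "\<bar>\<Sum>i<K. eps i\<bar> \<le> 1"
  unfolding sum_eps_lt by simp

definition SS :: "nat \<Rightarrow> nat \<Rightarrow> nat set set" where
  "SS K d = {T. T \<subseteq> {..<K} \<and> card T = d}"

lemma SS_finite: "finite (SS K d)"
  unfolding SS_def by (rule finite_subset[of _ "Pow {..<K}"]) auto

lemma SS_nonempty: "d \<le> K \<Longrightarrow> SS K d \<noteq> {}"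
proof -
  assume "d \<le> K"
  then have "{..<d} \<in> SS K d" unfolding SS_def by auto
  then show ?thesis by auto
qed

lemma pair_count:
  assumes ij: "i < K" "j < K" "i \<noteq> j"
  shows "card {T \<in> SS K d. i \<in> T \<and> j \<in> T} = (if 2 \<le> d then (K - 2) choose (d - 2) else 0)"
proof -
  define A where "A = {U. U \<subseteq> {..<K} - {i, j} \<and> card U + 2 = d}"
  have bij: "bij_betw (\<lambda>U. insert i (insert j U)) A {T \<in> SS K d. i \<in> T \<and> j \<in> T}"
  proof (rule bij_betw_byWitness[where f'="\<lambda>T. T - {i, j}"])
    show "\<forall>a\<in>A. insert i (insert j a) - {i, j} = a" unfolding A_def by auto
    show "\<forall>a\<in>{T \<in> SS K d. i \<in> T \<and> j \<in> T}. insert i (insert j (a - {i, j})) = a" by auto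
    show "(\<lambda>U. insert i (insert j U)) ` A \<subseteq> {T \<in> SS K d. i \<in> T \<and> j \<in> T}"
    proof
      fix T assume "T \<in> (\<lambda>U. insert i (insert j U)) ` A"
      then obtain U where U: "U \<subseteq> {..<K} - {i, j}" "card U + 2 = d" and T: "T = insert i (insert j U)"
        unfolding A_def by auto
      have fU: "finite U" using U(1) finite_subset by blast
      have iU: "i \<notin> U" "j \<notin> U" using U(1) by auto
      have "card T = card U + 2" unfolding T using fU iU ij(3) by (simp add: card_insert_if)
      then show "T \<in> {T \<in> SS K d. i \<in> T \<and> j \<in> T}" unfolding SS_def using U ij T by auto
    qed
    show "(\<lambda>T. T - {i, j}) ` {T \<in> SS K d. i \<in> T \<and> j \<in> T} \<subseteq> A"
    proof
      fix U assume "U \<in> (\<lambda>T. T - {i, j}) ` {T \<in> SS K d. i \<in> T \<and> j \<in> T}"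
      then obtain T where T: "T \<subseteq> {..<K}" "card T = d" "i \<in> T" "j \<in> T" and U: "U = T - {i, j}"
        unfolding SS_def by auto
      have fT: "finite T" using T(1) finite_subset by blast
      have "card U = card T - 2" unfolding U using fT T(3,4) ij(3) by (simp add: card_Diff_subset)
      moreover have "card {i, j} \<le> card T" using fT T(3,4) by (intro card_mono) auto
      ultimately have "card U + 2 = d" using T(2) ij(3) by simp
      then show "U \<in> A" unfolding A_def U using T by auto
    qed
  qed
  have "card {T \<in> SS K d. i \<in> T \<and> j \<in> T} = card A" using bij_betw_same_card[OF bij] by simp
  also have "card A = (if 2 \<le> d then (K - 2) choose (d - 2) else 0)"
  proof (cases "2 \<le> d")
    case True
    then have "A = {U. U \<subseteq> {..<K} - {i, j} \<and> card U = d - 2}" unfolding A_def by auto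
    moreover have "card ({..<K} - {i, j}) = K - 2" using ij by (simp add: card_Diff_subset)
    ultimately show ?thesis using True n_subsets[of "{..<K} - {i, j}" "d - 2"] by simp
  next
    case False
    then have "A = {}" unfolding A_def by auto
    then show ?thesis using False by simp
  qed
  finally show ?thesis .
qed

lemma second_moment:
  assumes Kpos: "K > 0"
  shows "(\<Sum>T\<in>SS K d. (EE T)^2) \<le> real K * card (SS K d)"
proof -
  define c where "c = (\<lambda>i j. real (card {T \<in> SS K d. i \<in> T \<and> j \<in> T}))"
  define cc where "cc = real (if 2 \<le> d then (K - 2) choose (d - 2) else 0)"
  have ccnn: "cc \<ge> 0" unfolding cc_def by simp
  have cij: "\<And>i j. i < K \<Longrightarrow> j < K \<Longrightarrow> c i j = cc + (if i = j then c i i - cc else 0)"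
    unfolding c_def cc_def using pair_count by auto
  have cii: "\<And>i. c i i \<le> card (SS K d)" unfolding c_def by (simp add: SS_finite card_mono)
  have sq: "\<And>T. T \<in> SS K d \<Longrightarrow> (EE T)^2 = (\<Sum>i<K. \<Sum>j<K. if i \<in> T \<and> j \<in> T then eps i * eps j else 0)"
  proof -
    fix T assume "T \<in> SS K d"
    then have T: "T \<subseteq> {..<K}" unfolding SS_def by auto
    have "EE T = (\<Sum>i<K. if i \<in> T then eps i else 0)"
      unfolding EE_def using T by (simp add: sum.If_cases Int_absorb1)
    then have "(EE T)^2 = (\<Sum>i<K. if i \<in> T then eps i else 0) * (\<Sum>j<K. if j \<in> T then eps j else 0)"
      by (simp add: power2_eq_square)
    also have "\<dots> = (\<Sum>i<K. \<Sum>j<K. (if i \<in> T then eps i else 0) * (if j \<in> T then eps j else 0))"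
      by (rule sum_product)
    also have "\<dots> = (\<Sum>i<K. \<Sum>j<K. if i \<in> T \<and> j \<in> T then eps i * eps j else 0)"
      by (intro sum.cong) auto
    finally show "(EE T)^2 = (\<Sum>i<K. \<Sum>j<K. if i \<in> T \<and> j \<in> T then eps i * eps j else 0)" .
  qed
  have "(\<Sum>T\<in>SS K d. (EE T)^2) = (\<Sum>T\<in>SS K d. \<Sum>i<K. \<Sum>j<K. if i \<in> T \<and> j \<in> T then eps i * eps j else 0)"
    using sq by (rule sum.cong[OF refl])
  also have "\<dots> = (\<Sum>i<K. \<Sum>j<K. \<Sum>T\<in>SS K d. if i \<in> T \<and> j \<in> T then eps i * eps j else 0)"
  proof -
    have "(\<Sum>T\<in>SS K d. \<Sum>i<K. \<Sum>j<K. if i \<in> T \<and> j \<in> T then eps i * eps j else 0)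
       = (\<Sum>i<K. \<Sum>T\<in>SS K d. \<Sum>j<K. if i \<in> T \<and> j \<in> T then eps i * eps j else 0)"
      by (rule sum.swap)
    also have "\<dots> = (\<Sum>i<K. \<Sum>j<K. \<Sum>T\<in>SS K d. if i \<in> T \<and> j \<in> T then eps i * eps j else 0)"
      by (intro sum.cong refl) (rule sum.swap)
    finally show ?thesis .
  qed
  also have "\<dots> = (\<Sum>i<K. \<Sum>j<K. eps i * eps j * c i j)"
  proof (intro sum.cong refl)
    fix i j
    have "(\<Sum>T\<in>SS K d. if i \<in> T \<and> j \<in> T then eps i * eps j else 0) = (\<Sum>T\<in>{T \<in> SS K d. i \<in> T \<and> j \<in> T}. eps i * eps j)"
      using sum.inter_filter[OF SS_finite, of "\<lambda>T. eps i * eps j" K d "\<lambda>T. i \<in> T \<and> j \<in> T"] by simp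
    then show "(\<Sum>T\<in>SS K d. if i \<in> T \<and> j \<in> T then eps i * eps j else 0) = eps i * eps j * c i j"
      unfolding c_def by simp
  qed
  also have "\<dots> = (\<Sum>i<K. \<Sum>j<K. cc * (eps i * eps j) + (if i = j then c i i - cc else 0))"
  proof (intro sum.cong refl)
    fix i j assume "i \<in> {..<K}" "j \<in> {..<K}"
    then have "c i j = cc + (if i = j then c i i - cc else 0)" using cij by auto
    then show "eps i * eps j * c i j = cc * (eps i * eps j) + (if i = j then c i i - cc else 0)"
      using eps_sq[of i] by (auto simp: algebra_simps power2_eq_square)
  qed
  also have "\<dots> = cc * (\<Sum>i<K. eps i)^2 + (\<Sum>i<K. c i i - cc)"
  proof -
    have "\<And>i. i < K \<Longrightarrow> (\<Sum>j<K. cc * (eps i * eps j) + (if i = j then c i i - cc else 0))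
        = cc * eps i * (\<Sum>j<K. eps j) + (c i i - cc)"
    proof -
      fix i assume i: "i < K"
      have "(\<Sum>j<K. cc * (eps i * eps j) + (if i = j then c i i - cc else 0))
          = (\<Sum>j<K. cc * eps i * eps j) + (\<Sum>j<K. (if i = j then c i i - cc else 0))"
        by (simp add: sum.distrib mult.assoc)
      also have "\<dots> = cc * eps i * (\<Sum>j<K. eps j) + (c i i - cc)"
        using i by (simp add: sum_distrib_left)
      finally show "(\<Sum>j<K. cc * (eps i * eps j) + (if i = j then c i i - cc else 0))
        = cc * eps i * (\<Sum>j<K. eps j) + (c i i - cc)" .
    qed
    then have "(\<Sum>i<K. \<Sum>j<K. cc * (eps i * eps j) + (if i = j then c i i - cc else 0))
        = (\<Sum>i<K. cc * eps i * (\<Sum>j<K. eps j) + (c i i - cc))" by (intro sum.cong) auto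
    also have "\<dots> = (\<Sum>i<K. cc * eps i * (\<Sum>j<K. eps j)) + (\<Sum>i<K. c i i - cc)"
      by (rule sum.distrib)
    also have "(\<Sum>i<K. cc * eps i * (\<Sum>j<K. eps j)) = cc * (\<Sum>i<K. eps i)^2"
      by (simp add: sum_distrib_right[symmetric] sum_distrib_left[symmetric] power2_eq_square)
    finally show ?thesis .
  qed
  also have "\<dots> \<le> cc * 1 + (\<Sum>i<K. real (card (SS K d)) - cc)"
  proof (intro add_mono mult_left_mono sum_mono ccnn)
    show "(\<Sum>i<K. eps i)^2 \<le> 1" using sum_eps_abs[of K] abs_le_square_iff[of "sum eps {..<K}" 1] by simp
    fix i show "c i i - cc \<le> real (card (SS K d)) - cc" using cii[of i] by simp
  qed
  also have "\<dots> = real K * card (SS K d) - cc * (real K - 1)" by (simp add: algebra_simps)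
  also have "\<dots> \<le> real K * card (SS K d)"
    using ccnn Kpos by simp
  finally show ?thesis .
qed

lemma cheb:
  assumes K: "K > 0" and d: "d \<le> K" and t: "t > 0"
  shows "measure_pmf.prob (pmf_of_set (SS K d)) {T. t \<le> \<bar>EE T\<bar>} \<le> real K / t^2"
proof -
  define S where "S = SS K d"
  have fin: "finite S" and ne: "S \<noteq> {}" unfolding S_def using SS_finite SS_nonempty[OF d] by auto
  have N: "real (card S) > 0" using fin ne by (simp add: card_gt_0_iff)
  have "real (card (S \<inter> {T. t \<le> \<bar>EE T\<bar>})) * t^2 = (\<Sum>T\<in>S \<inter> {T. t \<le> \<bar>EE T\<bar>}. t^2)" by simp
  also have "\<dots> \<le> (\<Sum>T\<in>S \<inter> {T. t \<le> \<bar>EE T\<bar>}. (EE T)^2)"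
  proof (rule sum_mono)
    fix T assume "T \<in> S \<inter> {T. t \<le> \<bar>EE T\<bar>}"
    then have "t \<le> \<bar>EE T\<bar>" by simp
    then show "t^2 \<le> (EE T)^2" using t by (metis abs_le_square_iff abs_of_pos)
  qed
  also have "\<dots> \<le> (\<Sum>T\<in>S. (EE T)^2)" using fin by (intro sum_mono2) auto
  also have "\<dots> \<le> real K * card S" unfolding S_def by (rule second_moment[OF K])
  finally have c: "real (card (S \<inter> {T. t \<le> \<bar>EE T\<bar>})) * t^2 \<le> real K * card S" .
  have "measure_pmf.prob (pmf_of_set S) {T. t \<le> \<bar>EE T\<bar>} = card (S \<inter> {T. t \<le> \<bar>EE T\<bar>}) / card S"
    by (rule measure_pmf_of_set[OF ne fin])
  also have "\<dots> \<le> real K / t^2" using c N t by (simp add: field_simps)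
  finally show ?thesis unfolding S_def .
qed

lemma var_bound:
  fixes f :: "'a \<Rightarrow> real"
  assumes fin: "finite S" and ne: "S \<noteq> {}"
  shows "measure_pmf.variance (pmf_of_set S) f \<le> (\<Sum>T\<in>S. (f T - h)^2) / card S"
proof -
  define m where "m = (\<Sum>T\<in>S. f T) / card S"
  have N: "real (card S) > 0" using fin ne by (simp add: card_gt_0_iff)
  have E: "measure_pmf.expectation (pmf_of_set S) f = m" unfolding m_def by (rule integral_pmf_of_set[OF ne fin])
  have V: "measure_pmf.variance (pmf_of_set S) f = (\<Sum>T\<in>S. (f T - m)^2) / card S"
    unfolding E by (rule integral_pmf_of_set[OF ne fin])
  have z: "(\<Sum>T\<in>S. f T - m) = 0" unfolding m_def using N by (simp add: sum_subtractf)
  have "(\<Sum>T\<in>S. (f T - h)^2) = (\<Sum>T\<in>S. (f T - m)^2 + 2 * (m - h) * (f T - m) + (m - h)^2)"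
    by (intro sum.cong) (auto simp: power2_eq_square algebra_simps)
  also have "\<dots> = (\<Sum>T\<in>S. (f T - m)^2) + 2 * (m - h) * (\<Sum>T\<in>S. f T - m) + card S * (m - h)^2"
    by (simp add: sum.distrib sum_distrib_left)
  finally have "(\<Sum>T\<in>S. (f T - h)^2) \<ge> (\<Sum>T\<in>S. (f T - m)^2)" unfolding z by simp
  then show ?thesis unfolding V using N by (simp add: divide_right_mono)
qed

lemma var_nonneg:
  fixes f :: "'a \<Rightarrow> real"
  assumes fin: "finite S" and ne: "S \<noteq> {}"
  shows "measure_pmf.variance (pmf_of_set S) f \<ge> 0"
  by (simp add: integral_pmf_of_set[OF ne fin] sum_nonneg)

lemma EE_abs: "finite A \<Longrightarrow> \<bar>EE A\<bar> \<le> card A"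
proof -
  assume "finite A"
  have "\<bar>EE A\<bar> \<le> (\<Sum>i\<in>A. \<bar>eps i\<bar>)" unfolding EE_def by (rule sum_abs)
  also have "\<dots> = card A" by (simp add: eps_abs)
  finally show ?thesis .
qed

lemma block_pv:
  fixes K :: nat and a m :: real assumes K: "K > 0" and A: "A \<subseteq> {..<K}"
  shows "block_var (SigM K (1/K)) (pv a m K) A
     = (card A * (a^2 + m^2) + 2 * a * m * EE A) / K + (a * card A + m * EE A)^2 / K^2"
proof -
  have Kr: "real K > 0" using K by simp
  have pi: "\<And>i. i \<in> A \<Longrightarrow> pv a m K $ i = (a + m * eps i) / sqrt K" unfolding pv_def using A by auto
  have Sij: "\<And>i j. i \<in> A \<Longrightarrow> j \<in> A \<Longrightarrow> SigM K (1/K) $$ (i, j) = (if i = j then 1 else 0) + 1 / K"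
  proof -
    fix i j assume "i \<in> A" "j \<in> A"
    then have "i < K" "j < K" using A by auto
    then show "SigM K (1/K) $$ (i, j) = (if i = j then 1 else 0) + 1 / K" unfolding SigM_def by simp
  qed
  have "block_var (SigM K (1/K)) (pv a m K) A = (\<Sum>i\<in>A. \<Sum>j\<in>A. (if i = j then (pv a m K $ i)^2 else 0) + (1/K) * (pv a m K $ i * pv a m K $ j))"
    unfolding block_var_def by (intro sum.cong refl) (auto simp: Sij algebra_simps power2_eq_square)
  also have "\<dots> = (\<Sum>i\<in>A. (pv a m K $ i)^2) + (1/K) * (\<Sum>i\<in>A. pv a m K $ i)^2"
  proof -
    have fA: "finite A" using A finite_subset by blast
    have "(\<Sum>i\<in>A. \<Sum>j\<in>A. (if i = j then (pv a m K $ i)^2 else 0) + (1/K) * (pv a m K $ i * pv a m K $ j))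
      = (\<Sum>i\<in>A. (pv a m K $ i)^2 + (1/K) * (pv a m K $ i * (\<Sum>j\<in>A. pv a m K $ j)))"
      using fA by (intro sum.cong refl) (simp add: sum.distrib sum_distrib_left)
    also have "\<dots> = (\<Sum>i\<in>A. (pv a m K $ i)^2) + (1/K) * (\<Sum>i\<in>A. pv a m K $ i)^2"
    proof -
      have "(\<Sum>i\<in>A. pv a m K $ i * (\<Sum>j\<in>A. pv a m K $ j) / K) = (\<Sum>i\<in>A. pv a m K $ i) * (\<Sum>j\<in>A. pv a m K $ j) / K"
        by (simp add: sum_divide_distrib[symmetric] sum_distrib_right[symmetric])
      then show ?thesis by (simp add: sum.distrib power2_eq_square)
    qed
    finally show ?thesis .
  qed
  also have "(\<Sum>i\<in>A. (pv a m K $ i)^2) = (\<Sum>i\<in>A. (a + m * eps i) * (a + m * eps i)) / K"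
    using Kr by (simp add: pi sum_divide_distrib power_divide power2_eq_square)
  also have "\<dots> = (card A * (a^2 + m^2) + 2 * a * m * EE A) / K"
    by (simp only: sum_quad) (simp add: power2_eq_square algebra_simps)
  also have "(\<Sum>i\<in>A. pv a m K $ i) = (a * card A + m * EE A) / sqrt K"
    by (simp add: pi sum_divide_distrib[symmetric] sum_lin)
  also have "(1 / K) * ((a * card A + m * EE A) / sqrt K)^2 = (a * card A + m * EE A)^2 / K^2"
    using Kr by (simp add: power_divide power2_eq_square)
  finally show ?thesis .
qed

lemma alg1: "(K::real) > 0 \<Longrightarrow> (c * (a^2 + m^2) + 2 * a * m * E) / K + (a * c + m * E)^2 / K^2 - (c * (a^2 + m^2) / K + a^2 * c^2 / K^2)
   = (E / K) * (2 * a * m + (2 * a * m * c + m^2 * E) / K)"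
  by (simp add: field_simps power2_eq_square)

lemma block_dev:
  fixes K :: nat and a m :: real assumes K: "K > 0" and A: "A \<subseteq> {..<K}"
  shows "(block_var (SigM K (1/K)) (pv a m K) A - (card A * (a^2 + m^2) / K + a^2 * (real (card A))^2 / K^2))^2
     \<le> (4 * \<bar>a * m\<bar> + m^2)^2 * (EE A)^2 / K^2"
proof -
  have Kr: "real K > 0" using K by simp
  have fA: "finite A" using A finite_subset by blast
  have cA: "real (card A) \<le> K" using card_mono[OF _ A] by simp
  have eA: "\<bar>EE A\<bar> \<le> K" using EE_abs[OF fA] cA by simp
  define E where "E = EE A"
  define c where "c = real (card A)"
  have "block_var (SigM K (1/K)) (pv a m K) A - (card A * (a^2 + m^2) / K + a^2 * (real (card A))^2 / K^2)
     = (E / K) * (2 * a * m + (2 * a * m * c + m^2 * E) / K)"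
    unfolding block_pv[OF K A] E_def[symmetric] c_def[symmetric] of_nat_power using alg1[OF Kr] .
  moreover have "\<bar>2 * a * m + (2 * a * m * c + m^2 * E) / K\<bar> \<le> 4 * \<bar>a * m\<bar> + m^2"
  proof -
    have c0: "c \<ge> 0" unfolding c_def by simp
    have c1: "\<bar>c / K\<bar> \<le> 1" using cA Kr c0 unfolding c_def by (simp add: abs_divide)
    have c2: "\<bar>E / K\<bar> \<le> 1" using eA Kr unfolding E_def by (simp add: abs_divide)
    have "\<bar>2 * a * m + (2 * a * m * c + m^2 * E) / K\<bar> \<le> \<bar>2 * a * m\<bar> + \<bar>2 * a * m\<bar> * \<bar>c / K\<bar> + m^2 * \<bar>E / K\<bar>"
    proof -
      have eq: "2 * a * m + (2 * a * m * c + m^2 * E) / K = 2 * a * m + 2 * a * m * (c / K) + m^2 * (E / K)"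
        by (simp add: add_divide_distrib)
      have tri: "\<And>x y z::real. \<bar>x + y + z\<bar> \<le> \<bar>x\<bar> + \<bar>y\<bar> + \<bar>z\<bar>"
        using abs_triangle_ineq[of "x+y" z] abs_triangle_ineq[of x y] by linarith
      have m1: "\<bar>2 * a * m * (c / K)\<bar> = \<bar>2 * a * m\<bar> * \<bar>c / K\<bar>" by (rule abs_mult)
      have m2: "\<bar>m^2 * (E / K)\<bar> = m^2 * \<bar>E / K\<bar>" by (simp add: abs_mult)
      show ?thesis unfolding eq using tri[of "2 * a * m" "2 * a * m * (c / K)" "m^2 * (E / K)"] m1 m2
        by linarith
    qed
    also have "\<dots> \<le> \<bar>2 * a * m\<bar> + \<bar>2 * a * m\<bar> * 1 + m^2 * 1"
      using c1 c2 by (intro add_mono mult_left_mono) auto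
    also have "\<dots> = 4 * \<bar>a * m\<bar> + m^2" by (simp add: abs_mult)
    finally show ?thesis .
  qed
  ultimately have "\<bar>block_var (SigM K (1/K)) (pv a m K) A - (card A * (a^2 + m^2) / K + a^2 * (real (card A))^2 / K^2)\<bar>
     \<le> \<bar>E / K\<bar> * (4 * \<bar>a * m\<bar> + m^2)"
  proof -
    assume e: "block_var (SigM K (1/K)) (pv a m K) A - (card A * (a^2 + m^2) / K + a^2 * (real (card A))^2 / K^2)
     = (E / K) * (2 * a * m + (2 * a * m * c + m^2 * E) / K)"
      and b: "\<bar>2 * a * m + (2 * a * m * c + m^2 * E) / K\<bar> \<le> 4 * \<bar>a * m\<bar> + m^2"
    have "\<bar>(E / K) * (2 * a * m + (2 * a * m * c + m^2 * E) / K)\<bar> = \<bar>E / K\<bar> * \<bar>2 * a * m + (2 * a * m * c + m^2 * E) / K\<bar>"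
      by (rule abs_mult)
    also have "\<dots> \<le> \<bar>E / K\<bar> * (4 * \<bar>a * m\<bar> + m^2)" by (rule mult_left_mono[OF b]) simp
    finally show ?thesis unfolding e .
  qed
  then have "(block_var (SigM K (1/K)) (pv a m K) A - (card A * (a^2 + m^2) / K + a^2 * (real (card A))^2 / K^2))^2
     \<le> (\<bar>E / K\<bar> * (4 * \<bar>a * m\<bar> + m^2))^2"
  proof -
    let ?X = "block_var (SigM K (1/K)) (pv a m K) A - (card A * (a^2 + m^2) / K + a^2 * (real (card A))^2 / K^2)"
    assume h: "\<bar>?X\<bar> \<le> \<bar>E / K\<bar> * (4 * \<bar>a * m\<bar> + m^2)"
    have "?X^2 = \<bar>?X\<bar>^2" by simp
    also have "\<dots> \<le> (\<bar>E / K\<bar> * (4 * \<bar>a * m\<bar> + m^2))^2" by (rule power_mono[OF h]) simp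
    finally show ?thesis .
  qed
  also have "\<dots> = (4 * \<bar>a * m\<bar> + m^2)^2 * (EE A)^2 / K^2"
    unfolding E_def by (simp add: power_mult_distrib power_divide)
  finally show ?thesis .
qed

lemma S_dist_SS: "S_dist K d = pmf_of_set (SS K d)" unfolding S_dist_def SS_def ..

lemma var_T:
  fixes a m :: real
  assumes K: "K > 0" and d: "d \<le> K"
  shows "measure_pmf.variance (S_dist K d) (\<lambda>T. block_var (SigM K (1/K)) (pv a m K) T) \<le> (4 * \<bar>a * m\<bar> + m^2)^2 / K"
proof -
  define B where "B = (4 * \<bar>a * m\<bar> + m^2)^2"
  define h where "h = real d * (a^2 + m^2) / K + a^2 * (real d)^2 / K^2"
  have fin: "finite (SS K d)" and ne: "SS K d \<noteq> {}" using SS_finite SS_nonempty[OF d] by auto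
  have N: "real (card (SS K d)) > 0" using fin ne by (simp add: card_gt_0_iff)
  have Kr: "real K > 0" using K by simp
  have "measure_pmf.variance (S_dist K d) (\<lambda>T. block_var (SigM K (1/K)) (pv a m K) T)
     \<le> (\<Sum>T\<in>SS K d. (block_var (SigM K (1/K)) (pv a m K) T - h)^2) / card (SS K d)"
    unfolding S_dist_SS by (rule var_bound[OF fin ne])
  also have "(\<Sum>T\<in>SS K d. (block_var (SigM K (1/K)) (pv a m K) T - h)^2) \<le> (\<Sum>T\<in>SS K d. B * (EE T)^2 / K^2)"
  proof (rule sum_mono)
    fix T assume "T \<in> SS K d"
    then have T: "T \<subseteq> {..<K}" "card T = d" unfolding SS_def by auto
    show "(block_var (SigM K (1/K)) (pv a m K) T - h)^2 \<le> B * (EE T)^2 / K^2"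
      using block_dev[OF K T(1), of a m] unfolding h_def B_def T(2) .
  qed
  also have "(\<Sum>T\<in>SS K d. B * (EE T)^2 / K^2) = B / K^2 * (\<Sum>T\<in>SS K d. (EE T)^2)"
    by (simp add: sum_distrib_left)
  also have "\<dots> \<le> B / K^2 * (real K * card (SS K d))"
    by (intro mult_left_mono second_moment[OF K]) (simp add: B_def)
  finally have "measure_pmf.variance (S_dist K d) (\<lambda>T. block_var (SigM K (1/K)) (pv a m K) T)
     \<le> B / K^2 * (real K * card (SS K d)) / card (SS K d)" using N by (simp add: divide_right_mono)
  also have "\<dots> = B / K" using N Kr by (simp add: field_simps power2_eq_square)
  finally show ?thesis unfolding B_def .
qed

lemma EE_U:
  assumes T: "T \<subseteq> {..<K}"
  shows "EE ({..<K} - T) = (\<Sum>i<K. eps i) - EE T"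
proof -
  have "{..<K} = T \<union> ({..<K} - T)" "T \<inter> ({..<K} - T) = {}" using T by auto
  then have "(\<Sum>i<K. eps i) = EE T + EE ({..<K} - T)" unfolding EE_def
    by (metis finite_Un finite_lessThan sum.union_disjoint)
  then show ?thesis by simp
qed

lemma EE_U_sq:
  assumes T: "T \<subseteq> {..<K}"
  shows "(EE ({..<K} - T))^2 \<le> 2 + 2 * (EE T)^2"
proof -
  define s where "s = (\<Sum>i<K. eps i)"
  have s: "s^2 \<le> 1" using sum_eps_abs[of K] abs_le_square_iff[of s 1] unfolding s_def by simp
  have "(s - EE T)^2 \<le> 2 * s^2 + 2 * (EE T)^2"
    using sum_squares_ge_zero[of "s + EE T" 0] by (simp add: power2_eq_square algebra_simps)
  then show ?thesis unfolding EE_U[OF T] s_def[symmetric] using s by simp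
qed

lemma var_U:
  fixes a m :: real
  assumes K: "K > 0" and d: "d \<le> K"
  shows "measure_pmf.variance (S_dist K d) (\<lambda>T. block_var (SigM K (1/K)) (pv a m K) ({..<K} - T)) \<le> 4 * (4 * \<bar>a * m\<bar> + m^2)^2 / K"
proof -
  define B where "B = (4 * \<bar>a * m\<bar> + m^2)^2"
  define h where "h = real (K - d) * (a^2 + m^2) / K + a^2 * (real (K - d))^2 / K^2"
  have fin: "finite (SS K d)" and ne: "SS K d \<noteq> {}" using SS_finite SS_nonempty[OF d] by auto
  have N: "real (card (SS K d)) > 0" using fin ne by (simp add: card_gt_0_iff)
  have Kr: "real K > 0" using K by simp
  have B0: "B \<ge> 0" unfolding B_def by simp
  have "measure_pmf.variance (S_dist K d) (\<lambda>T. block_var (SigM K (1/K)) (pv a m K) ({..<K} - T))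
     \<le> (\<Sum>T\<in>SS K d. (block_var (SigM K (1/K)) (pv a m K) ({..<K} - T) - h)^2) / card (SS K d)"
    unfolding S_dist_SS by (rule var_bound[OF fin ne])
  also have "(\<Sum>T\<in>SS K d. (block_var (SigM K (1/K)) (pv a m K) ({..<K} - T) - h)^2) \<le> (\<Sum>T\<in>SS K d. B * (2 + 2 * (EE T)^2) / K^2)"
  proof (rule sum_mono)
    fix T assume "T \<in> SS K d"
    then have T: "T \<subseteq> {..<K}" "card T = d" unfolding SS_def by auto
    have fT: "finite T" using T(1) finite_subset by blast
    have cU: "card ({..<K} - T) = K - d" using card_Diff_subset[OF fT T(1)] T(2) by simp
    have "(block_var (SigM K (1/K)) (pv a m K) ({..<K} - T) - h)^2 \<le> B * (EE ({..<K} - T))^2 / K^2"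
      using block_dev[OF K, of "{..<K} - T" a m] unfolding h_def B_def cU by simp
    also have "\<dots> \<le> B * (2 + 2 * (EE T)^2) / K^2"
      using EE_U_sq[OF T(1)] B0 by (intro divide_right_mono mult_left_mono) auto
    finally show "(block_var (SigM K (1/K)) (pv a m K) ({..<K} - T) - h)^2 \<le> B * (2 + 2 * (EE T)^2) / K^2" .
  qed
  also have "(\<Sum>T\<in>SS K d. B * (2 + 2 * (EE T)^2) / K^2) = B / K^2 * (2 * card (SS K d) + 2 * (\<Sum>T\<in>SS K d. (EE T)^2))"
    by (simp add: sum_distrib_left sum.distrib algebra_simps sum_divide_distrib[symmetric] add_divide_distrib)
  also have "\<dots> \<le> B / K^2 * (2 * card (SS K d) + 2 * (real K * card (SS K d)))"
    using second_moment[OF K, of d] B0 by (intro mult_left_mono add_left_mono) auto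
  finally have "measure_pmf.variance (S_dist K d) (\<lambda>T. block_var (SigM K (1/K)) (pv a m K) ({..<K} - T))
     \<le> B / K^2 * (2 * card (SS K d) + 2 * (real K * card (SS K d))) / card (SS K d)" using N by (simp add: divide_right_mono)
  also have "\<dots> = B * (2 + 2 * K) / K^2" using N Kr by (simp add: field_simps)
  also have "\<dots> \<le> B * (4 * K) / K^2" using K B0 by (intro divide_right_mono mult_left_mono) auto
  also have "\<dots> = 4 * B / K" using Kr by (simp add: power2_eq_square)
  finally show ?thesis unfolding B_def .
qed

lemma cont3_delta:
  fixes G :: "real \<Rightarrow> real \<Rightarrow> real \<Rightarrow> real"
  assumes c: "continuous (at (a, b, c)) (\<lambda>z. G (fst z) (fst (snd z)) (snd (snd z)))" and e: "e > 0"
  shows "\<exists>\<delta>>0. \<forall>x y w. \<bar>x - a\<bar> < \<delta> \<and> \<bar>y - b\<bar> < \<delta> \<and> \<bar>w - c\<bar> < \<delta> \<longrightarrow> \<bar>G x y w - G a b c\<bar> < e"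
proof -
  obtain d where d: "d > 0" and H: "\<And>z. dist z (a, b, c) < d \<Longrightarrow> dist (G (fst z) (fst (snd z)) (snd (snd z))) (G a b c) < e"
    using c e unfolding continuous_at_eps_delta by fastforce
  show ?thesis
  proof (intro exI[of _ "d / 3"] conjI allI impI)
    show "d / 3 > 0" using d by simp
    fix x y w assume h: "\<bar>x - a\<bar> < d / 3 \<and> \<bar>y - b\<bar> < d / 3 \<and> \<bar>w - c\<bar> < d / 3"
    have A: "dist (x, y, w) (a, b, c) \<le> \<bar>dist x a\<bar> + \<bar>dist (y, w) (b, c)\<bar>"
      unfolding dist_Pair_Pair[of x "(y, w)" a "(b, c)"] by (rule sqrt_sum_squares_le_sum_abs)
    have B: "dist (y, w) (b, c) \<le> \<bar>dist y b\<bar> + \<bar>dist w c\<bar>"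
      unfolding dist_Pair_Pair[of y w b c] by (rule sqrt_sum_squares_le_sum_abs)
    have "dist (x, y, w) (a, b, c) \<le> \<bar>x - a\<bar> + (\<bar>y - b\<bar> + \<bar>w - c\<bar>)"
      using A B by (simp add: dist_real_def)
    also have "\<dots> < d" using h by simp
    finally have "dist (x, y, w) (a, b, c) < d" .
    then show "\<bar>G x y w - G a b c\<bar> < e" using H[of "(x, y, w)"] by (simp add: dist_real_def)
  qed
qed

lemma prob_to0:
  fixes G :: "real \<Rightarrow> real \<Rightarrow> real \<Rightarrow> real" and D :: "nat \<Rightarrow> nat set \<Rightarrow> real" and d :: "nat \<Rightarrow> nat"
  assumes cont: "continuous (at (x0, 0, 0)) (\<lambda>z. G (fst z) (fst (snd z)) (snd (snd z)))"
    and dK: "\<And>K. d K \<le> K" and dlim: "(\<lambda>K. real (d K) / K) \<longlonglongrightarrow> x0"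
    and DG: "\<And>K T. K > 0 \<Longrightarrow> T \<in> SS K (d K) \<Longrightarrow> D K T = G (d K / K) (EE T / K) (EE ({..<K} - T) / K)"
    and e: "e > 0"
  shows "(\<lambda>K. measure_pmf.prob (S_dist K (d K)) {T. \<bar>D K T - G x0 0 0\<bar> > e}) \<longlonglongrightarrow> 0"
proof -
  obtain \<delta> where dp: "\<delta> > 0" and H: "\<And>x y w. \<bar>x - x0\<bar> < \<delta> \<Longrightarrow> \<bar>y - 0\<bar> < \<delta> \<Longrightarrow> \<bar>w - 0\<bar> < \<delta> \<Longrightarrow> \<bar>G x y w - G x0 0 0\<bar> < e"
    using cont3_delta[OF cont e] by blast
  have ev1: "eventually (\<lambda>K. \<bar>real (d K) / K - x0\<bar> < \<delta>) sequentially"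
    using dlim dp unfolding tendsto_iff dist_real_def by blast
  obtain N0 :: nat where N0: "N0 > 2 / \<delta>" using reals_Archimedean2 by blast
  have ev2: "eventually (\<lambda>K::nat. K \<ge> max 1 N0) sequentially" by (rule eventually_ge_at_top)
  have bound: "eventually (\<lambda>K. measure_pmf.prob (S_dist K (d K)) {T. \<bar>D K T - G x0 0 0\<bar> > e} \<le> 4 / (\<delta>^2 * K)) sequentially"
    using ev1 ev2
  proof eventually_elim
    case (elim K)
    have K: "K > 0" and KN: "real K > 2 / \<delta>" using elim(2) N0 by auto
    have Kr: "real K > 0" using K by simp
    have iK: "1 / real K < \<delta> / 2" using KN dp Kr by (simp add: field_simps)
    define S where "S = SS K (d K)"
    have fin: "finite S" and ne: "S \<noteq> {}" unfolding S_def using SS_finite SS_nonempty[OF dK] by auto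
    have sub: "S \<inter> {T. \<bar>D K T - G x0 0 0\<bar> > e} \<subseteq> S \<inter> {T. \<delta> * K / 2 \<le> \<bar>EE T\<bar>}"
    proof
      fix T assume T: "T \<in> S \<inter> {T. \<bar>D K T - G x0 0 0\<bar> > e}"
      show "T \<in> S \<inter> {T. \<delta> * K / 2 \<le> \<bar>EE T\<bar>}"
      proof (rule ccontr)
        assume "T \<notin> S \<inter> {T. \<delta> * K / 2 \<le> \<bar>EE T\<bar>}"
        then have small: "\<bar>EE T\<bar> < \<delta> * K / 2" using T by auto
        have TK: "T \<subseteq> {..<K}" using T unfolding S_def SS_def by auto
        have y: "\<bar>EE T / K\<bar> < \<delta> / 2" using small Kr by (simp add: abs_divide field_simps)
        have "\<bar>EE ({..<K} - T)\<bar> \<le> 1 + \<bar>EE T\<bar>"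
          unfolding EE_U[OF TK] using sum_eps_abs[of K] by linarith
        then have "\<bar>EE ({..<K} - T)\<bar> / K \<le> (1 + \<bar>EE T\<bar>) / K"
          using Kr by (intro divide_right_mono) auto
        then have "\<bar>EE ({..<K} - T) / K\<bar> \<le> 1 / K + \<bar>EE T / K\<bar>"
          using Kr by (simp add: abs_divide add_divide_distrib)
        then have w: "\<bar>EE ({..<K} - T) / K\<bar> < \<delta>" using y iK by linarith
        have "\<bar>G (d K / K) (EE T / K) (EE ({..<K} - T) / K) - G x0 0 0\<bar> < e"
        proof (rule H[OF elim(1)])
          show "\<bar>EE T / K - 0\<bar> < \<delta>" using y dp unfolding diff_zero by linarith
          show "\<bar>EE ({..<K} - T) / K - 0\<bar> < \<delta>" using w by simp
        qed
        then show False using T DG[OF K] unfolding S_def by auto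
      qed
    qed
    have "measure_pmf.prob (S_dist K (d K)) {T. \<bar>D K T - G x0 0 0\<bar> > e} = card (S \<inter> {T. \<bar>D K T - G x0 0 0\<bar> > e}) / card S"
      unfolding S_dist_SS S_def[symmetric] by (rule measure_pmf_of_set[OF ne fin])
    also have "\<dots> \<le> card (S \<inter> {T. \<delta> * K / 2 \<le> \<bar>EE T\<bar>}) / card S"
      using sub fin by (intro divide_right_mono) (auto intro: card_mono)
    also have "\<dots> = measure_pmf.prob (S_dist K (d K)) {T. \<delta> * K / 2 \<le> \<bar>EE T\<bar>}"
      unfolding S_dist_SS S_def[symmetric] by (rule measure_pmf_of_set[OF ne fin, symmetric])
    also have "\<dots> \<le> real K / (\<delta> * K / 2)^2" unfolding S_dist_SS by (rule cheb[OF K dK]) (use dp Kr in simp)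
    also have "\<dots> = 4 / (\<delta>^2 * K)" using Kr dp by (simp add: field_simps power2_eq_square)
    finally show ?case .
  qed
  have lim: "(\<lambda>K. 4 / (\<delta>^2 * real K)) \<longlonglongrightarrow> 0"
  proof -
    have "(\<lambda>K. (4 / \<delta>^2) * (1 / real K)) \<longlonglongrightarrow> (4 / \<delta>^2) * 0"
      by (intro tendsto_mult tendsto_const lim_const_over_n)
    then show ?thesis by simp
  qed
  show ?thesis
    by (rule tendsto_sandwich[OF _ bound tendsto_const lim]) simp
qed

lemma Fz_cont:
  fixes a m l x0 :: real
  assumes x: "0 < x0" "x0 < 1"
    and N2: "(a + m * l) * x0 + (1 - x0) * (a * x0) / (1 + x0) + a * (x0 + (1 - x0) * x0 / (1 + x0)) \<noteq> 0"
  shows "continuous (at (x0, 0, 0)) (\<lambda>z. Fz a m l (fst z) (fst (snd z)) (snd (snd z)))"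
proof -
  have p1: "(1 + l^2) * (1 - x0) > 0" using x by (simp add: add_pos_nonneg)
  have p2: "(1 + l^2) * x0 > 0" using x by (simp add: add_pos_nonneg)
  have n1: "((1 - x0) / (1 + x0))^2 * x0 \<ge> 0" using x by simp
  have n2: "(2 - 2 * x0) * x0 / (1 + x0) \<ge> 0" using x by simp
  have D1: "(1 + l^2) * (1 - x0) + ((1 - x0) / (1 + x0))^2 * x0 + (1 - x0 - (1 - x0) * x0 / (1 + x0))^2 \<noteq> 0"
    using p1 n1 zero_le_power2[of "1 - x0 - (1 - x0) * x0 / (1 + x0)"] by linarith
  have D2: "(1 + l^2) * x0 + (2 - 2 * x0) * x0 / (1 + x0) + ((1 - x0) / (1 + x0))^2 * x0 + (x0 + (1 - x0) * x0 / (1 + x0))^2 \<noteq> 0"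
    using p2 n1 n2 zero_le_power2[of "x0 + (1 - x0) * x0 / (1 + x0)"] by linarith
  show ?thesis
    unfolding Fz_def dform_def Let_def
    by (intro continuous_intros) (use x D1 D2 N2 in simp_all)
qed

lemma params_exist:
  fixes x0 C :: real
  assumes x: "0 < x0" "x0 < 1"
  shows "\<exists>a m l. l^2 = 1 \<and> a + m \<noteq> 0 \<and>
     (a + m * l) * x0 + (1 - x0) * (a * x0) / (1 + x0) + a * (x0 + (1 - x0) * x0 / (1 + x0)) \<noteq> 0 \<and>
     Fz a m l x0 0 0 = C"
proof -
  define k where "k = (1 - x0) / (1 + x0)"
  have k0: "k > 0" unfolding k_def using x by simp
  define A1 where "A1 = (1 - x0) - 2 * k * x0"
  define A2 where "A2 = x0 * (1 + 2 * k)"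
  define D1 where "D1 = 2 * (1 - x0) + k^2 * x0 + ((1 - x0) - k * x0)^2"
  define D2 where "D2 = 2 * x0 + 2 * k * x0 + k^2 * x0 + (x0 + k * x0)^2"
  have D1p: "D1 > 0" unfolding D1_def using x by (simp add: add_pos_nonneg)
  have D2p: "D2 > 0" unfolding D2_def using x k0 by (simp add: add_pos_nonneg)
  have form: "\<And>a m l. l^2 = 1 \<Longrightarrow> Fz a m l x0 0 0 = ((((a + m * l) * (1 - x0) + a * A1) / D1) / (((a + m * l) * x0 + a * A2) / D2))"
  proof -
    fix a m l :: real assume l: "l^2 = 1"
    have kk: "1 * (1 - x0 + l * 0) / (1 + 1 * x0) = k" unfolding k_def by simp
    have e1: "(a + m * l) * (1 - x0) + (a * l + m) * 0 - k * (a * x0 + m * 0) + 1 * (a + m * (0 + 0)) * (1 - x0 + l * 0 - k * x0)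
        = (a + m * l) * (1 - x0) + a * A1" unfolding A1_def by (simp add: algebra_simps)
    have e2: "(1 + l^2) * (1 - x0) + 2 * l * 0 + k^2 * x0 + 1 * (1 - x0 + l * 0 - k * x0)^2 = D1"
      unfolding D1_def l by simp
    have e3: "(a + m * l) * x0 + (a * l + m) * 0 + k * (a * x0 + m * 0) + 1 * (a + m * (0 + 0)) * (x0 + l * 0 + k * x0)
        = (a + m * l) * x0 + a * A2" unfolding A2_def by (simp add: algebra_simps)
    have e4: "(1 + l^2) * x0 + 2 * l * 0 + 2 * k * (x0 + l * 0) + k^2 * x0 + 1 * (x0 + l * 0 + k * x0)^2 = D2"
      unfolding D2_def l by simp
    show "Fz a m l x0 0 0 = ((((a + m * l) * (1 - x0) + a * A1) / D1) / (((a + m * l) * x0 + a * A2) / D2))"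
      unfolding Fz_def dform_def Let_def kk e1 e2 e3 e4 ..
  qed
  have N2form: "\<And>a m l. (a + m * l) * x0 + (1 - x0) * (a * x0) / (1 + x0) + a * (x0 + (1 - x0) * x0 / (1 + x0))
      = (a + m * l) * x0 + a * A2"
    unfolding A2_def k_def by (simp add: algebra_simps)
  define \<Delta> where "\<Delta> = C * D1 * x0 - D2 * (1 - x0)"
  show ?thesis
  proof (cases "\<Delta> = 0")
    case True
    have "Fz 0 1 1 x0 0 0 = C"
    proof -
      have "Fz 0 1 1 x0 0 0 = ((1 - x0) / D1) / (x0 / D2)" using form[of 1 0 1] by simp
      also have "\<dots> = C" using True D1p D2p x unfolding \<Delta>_def by (simp add: field_simps)
      finally show ?thesis .
    qed
    then show ?thesis using x N2form[of 0 1 1] by (intro exI[of _ 0] exI[of _ 1] exI[of _ 1]) auto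
  next
    case False
    define \<beta> where "\<beta> = (D2 * A1 - C * D1 * A2) / \<Delta>"
    have eq: "C * D1 * (\<beta> * x0 + A2) = D2 * (\<beta> * (1 - x0) + A1)"
      unfolding \<beta>_def using False unfolding \<Delta>_def by (simp add: field_simps)
    have N2nz: "\<beta> * x0 + A2 \<noteq> 0"
    proof
      assume z: "\<beta> * x0 + A2 = 0"
      then have "\<beta> * (1 - x0) + A1 = 0" using eq D2p by simp
      then have "x0 * (\<beta> * (1 - x0) + A1) - (1 - x0) * (\<beta> * x0 + A2) = 0" using z by simp
      then have "x0 * A1 - (1 - x0) * A2 = 0" by (simp add: algebra_simps)
      then have "- 2 * k * x0 = 0" unfolding A1_def A2_def by (simp add: algebra_simps)
      then show False using k0 x by simp
    qed
    define l where "l = (if \<beta> = 0 then -1 else (1::real))"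
    define m where "m = (\<beta> - 1) * l"
    have l2: "l^2 = 1" unfolding l_def by simp
    have b: "1 + m * l = \<beta>" unfolding m_def using l2 by (simp add: power2_eq_square algebra_simps)
    have am: "1 + m \<noteq> 0" unfolding m_def l_def by auto
    have "Fz 1 m l x0 0 0 = C"
    proof -
      have "Fz 1 m l x0 0 0 = ((\<beta> * (1 - x0) + A1) / D1) / ((\<beta> * x0 + A2) / D2)"
        using form[OF l2, of 1 m] unfolding b by simp
      also have "\<dots> = (D2 * (\<beta> * (1 - x0) + A1)) / (D1 * (\<beta> * x0 + A2))"
        using D1p D2p N2nz by (simp add: field_simps)
      also have "\<dots> = (C * D1 * (\<beta> * x0 + A2)) / (D1 * (\<beta> * x0 + A2))" unfolding eq ..
      also have "\<dots> = C" using D1p N2nz by simp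
      finally show ?thesis .
    qed
    moreover have "(1 + m * l) * x0 + (1 - x0) * (1 * x0) / (1 + x0) + 1 * (x0 + (1 - x0) * x0 / (1 + x0)) \<noteq> 0"
      using N2form[of 1 m l] N2nz unfolding b by simp
    ultimately show ?thesis using l2 am by (intro exI[of _ 1] exI[of _ m] exI[of _ l]) auto
  qed
qed

lemma quad_form:
  assumes x: "x \<in> carrier_vec K"
  shows "x \<bullet> (SigM K \<rho> *\<^sub>v x) = (\<Sum>i<K. (x $ i)^2) + \<rho> * (\<Sum>i<K. x $ i)^2"
proof -
  have "x \<bullet> (SigM K \<rho> *\<^sub>v x) = (\<Sum>i<K. x $ i * (x $ i + \<rho> * (\<Sum>j<K. x $ j)))"
    unfolding sig_vec[OF x] by (rule scal_vec[OF x])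
  also have "\<dots> = (\<Sum>i<K. (x $ i)^2 + \<rho> * (\<Sum>j<K. x $ j) * x $ i)"
    by (intro sum.cong) (auto simp: algebra_simps power2_eq_square)
  also have "\<dots> = (\<Sum>i<K. (x $ i)^2) + \<rho> * (\<Sum>j<K. x $ j) * (\<Sum>i<K. x $ i)"
    by (simp add: sum.distrib sum_distrib_left)
  finally show ?thesis by (simp add: power2_eq_square)
qed

lemma posdef_Sig: "pos_def_mat (SigM K (1 / real K)) K"
  unfolding pos_def_mat_def
proof (intro conjI ballI impI)
  show "SigM K (1 / real K) \<in> carrier_mat K K" unfolding SigM_def by simp
  show "transpose_mat (SigM K (1 / real K)) = SigM K (1 / real K)"
    unfolding SigM_def by (intro eq_matI) auto
  fix x :: "real vec" assume x: "x \<in> carrier_vec K" and nz: "x \<noteq> 0\<^sub>v K"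
  obtain i where i: "i < K" "x $ i \<noteq> 0"
  proof -
    have "\<exists>i<K. x $ i \<noteq> 0"
    proof (rule ccontr)
      assume "\<not> (\<exists>i<K. x $ i \<noteq> 0)"
      then have "x = 0\<^sub>v K" using x by (intro eq_vecI) auto
      then show False using nz by simp
    qed
    then show ?thesis using that by blast
  qed
  have "0 < (\<Sum>i<K. (x $ i)^2)"
    by (rule sum_pos2[of "{..<K}" i]) (use i in auto)
  moreover have "0 \<le> 1 / real K * (\<Sum>i<K. x $ i)^2" by simp
  ultimately show "x \<bullet> (SigM K (1 / real K) *\<^sub>v x) > 0" unfolding quad_form[OF x] by linarith
qed

lemma pv_sums:
  fixes a m :: real assumes K: "K > 0"
  shows "(\<Sum>i<K. (pv a m K $ i)^2) = (a^2 + m^2) + 2 * a * m * ((\<Sum>i<K. eps i) / K)"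
    and "(\<Sum>i<K. pv a m K $ i) = sqrt K * (a + m * ((\<Sum>i<K. eps i) / K))"
proof -
  have Kr: "real K > 0" using K by simp
  have pi: "\<And>i. i \<in> {..<K} \<Longrightarrow> pv a m K $ i = (a + m * eps i) / sqrt K" unfolding pv_def by auto
  have "(\<Sum>i<K. (pv a m K $ i)^2) = (\<Sum>i<K. (a + m * eps i) * (a + m * eps i)) / K"
    using Kr by (simp add: pi sum_divide_distrib power_divide power2_eq_square)
  also have "\<dots> = ((a * a + m * m) * K + (a * m + m * a) * EE {..<K}) / K"
    by (simp only: sum_quad) simp
  also have "\<dots> = (a^2 + m^2) + 2 * a * m * ((\<Sum>i<K. eps i) / K)"
    unfolding EE_def using Kr by (simp add: field_simps power2_eq_square)
  finally show "(\<Sum>i<K. (pv a m K $ i)^2) = (a^2 + m^2) + 2 * a * m * ((\<Sum>i<K. eps i) / K)" .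
  have "(\<Sum>i<K. pv a m K $ i) = (\<Sum>i<K. a + m * eps i) / sqrt K"
    by (simp add: pi sum_divide_distrib)
  also have "\<dots> = (a * K + m * EE {..<K}) / sqrt K" by (simp only: sum_lin) simp
  also have "\<dots> = sqrt K * (a + m * ((\<Sum>i<K. eps i) / K))"
    unfolding EE_def using Kr by (simp add: field_simps)
  finally show "(\<Sum>i<K. pv a m K $ i) = sqrt K * (a + m * ((\<Sum>i<K. eps i) / K))" .
qed

lemma pv_quad:
  fixes a m :: real assumes K: "K > 0"
  shows "pv a m K \<bullet> (SigM K (1 / real K) *\<^sub>v pv a m K)
     = (a^2 + m^2) + 2 * a * m * ((\<Sum>i<K. eps i) / K) + (a + m * ((\<Sum>i<K. eps i) / K))^2"
proof -
  have Kr: "real K > 0" using K by simp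
  have pc: "pv a m K \<in> carrier_vec K" unfolding pv_def by simp
  show ?thesis unfolding quad_form[OF pc] pv_sums[OF K] using Kr
    by (simp add: power_mult_distrib)
qed

lemma sK_bounds: "K > 0 \<Longrightarrow> 0 \<le> (\<Sum>i<K. eps i) / real K \<and> (\<Sum>i<K. eps i) / real K \<le> 1"
  unfolding sum_eps_lt by auto

lemma sK_lim: "(\<lambda>K. (\<Sum>i<K. eps i) / real K) \<longlonglongrightarrow> 0"
proof (rule tendsto_sandwich[of "\<lambda>_. 0" _ _ "\<lambda>K. 1 / real K"])
  show "\<forall>\<^sub>F n in sequentially. 0 \<le> (\<Sum>i<n. eps i) / real n"
    unfolding sum_eps_lt by simp
  show "\<forall>\<^sub>F n in sequentially. (\<Sum>i<n. eps i) / real n \<le> 1 / real n"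
    unfolding sum_eps_lt by (simp add: divide_right_mono)
qed (auto intro: lim_const_over_n[of 1, simplified])

lemma P1_K:
  fixes a m :: real and K :: nat assumes K1: "K \<ge> 1"
  shows "min (a^2 + m^2) ((a + m)^2) \<le> pv a m K \<bullet> (SigM K (1 / real K) *\<^sub>v pv a m K)
    \<and> pv a m K \<bullet> (SigM K (1 / real K) *\<^sub>v pv a m K) \<le> (a^2 + m^2) + 2 * \<bar>a * m\<bar> + (\<bar>a\<bar> + \<bar>m\<bar>)^2"
proof -
  define e0 where "e0 = min (a^2 + m^2) ((a + m)^2)"
  define M0 where "M0 = (a^2 + m^2) + 2 * \<bar>a * m\<bar> + (\<bar>a\<bar> + \<bar>m\<bar>)^2"
  have K: "K > 0" using K1 by simp
  define s where "s = (\<Sum>i<K. eps i) / real K"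
  have s: "0 \<le> s" "s \<le> 1" using sK_bounds[OF K] unfolding s_def by auto
  have q: "pv a m K \<bullet> (SigM K (1 / real K) *\<^sub>v pv a m K) = (a^2 + m^2) + 2 * a * m * s + (a + m * s)^2"
    unfolding s_def by (rule pv_quad[OF K])
  have "(a^2 + m^2) + 2 * a * m * s = (1 - s) * (a^2 + m^2) + s * (a + m)^2"
    by (simp add: algebra_simps power2_eq_square)
  also have "\<dots> \<ge> (1 - s) * e0 + s * e0"
    unfolding e0_def using s by (intro add_mono mult_left_mono) auto
  finally have lo: "(a^2 + m^2) + 2 * a * m * s \<ge> e0" by (simp add: algebra_simps)
  have h1: "2 * a * m * s \<le> 2 * \<bar>a * m\<bar>"
  proof -
    have "2 * a * m * s \<le> \<bar>2 * a * m * s\<bar>" by simp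
    also have "\<dots> = 2 * \<bar>a * m\<bar> * s" using s by (simp add: abs_mult)
    also have "\<dots> \<le> 2 * \<bar>a * m\<bar>" using s by (simp add: mult_left_le)
    finally show ?thesis .
  qed
  have h2: "(a + m * s)^2 \<le> (\<bar>a\<bar> + \<bar>m\<bar>)^2"
  proof -
    have "\<bar>a + m * s\<bar> \<le> \<bar>a\<bar> + \<bar>m\<bar>"
    proof -
      have "\<bar>a + m * s\<bar> \<le> \<bar>a\<bar> + \<bar>m * s\<bar>" by (rule abs_triangle_ineq)
      also have "\<bar>m * s\<bar> \<le> \<bar>m\<bar>" using s by (simp add: abs_mult mult_left_le)
      finally show ?thesis by simp
    qed
    then have "\<bar>a + m * s\<bar>^2 \<le> (\<bar>a\<bar> + \<bar>m\<bar>)^2" by (rule power_mono) simp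
    then show ?thesis by simp
  qed
  show ?thesis unfolding q e0_def[symmetric] using lo h1 h2 zero_le_power2[of "a + m * s"] by linarith
qed

lemma P1_bounds:
  fixes a m :: real assumes am: "a + m \<noteq> 0"
  shows "\<exists>eps M. 0 < eps \<and> eps \<le> M \<and>
     (\<forall>K\<ge>1. eps \<le> pv a m K \<bullet> (SigM K (1 / real K) *\<^sub>v pv a m K) \<and> pv a m K \<bullet> (SigM K (1 / real K) *\<^sub>v pv a m K) \<le> M)"
proof -
  define e0 where "e0 = min (a^2 + m^2) ((a + m)^2)"
  define M0 where "M0 = (a^2 + m^2) + 2 * \<bar>a * m\<bar> + (\<bar>a\<bar> + \<bar>m\<bar>)^2"
  have e0p: "e0 > 0" unfolding e0_def using am by (auto simp: add_pos_nonneg sum_power2_gt_zero_iff)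
  have e0M: "e0 \<le> M0" unfolding e0_def M0_def by (simp add: min_le_iff_disj)
  have "\<forall>K\<ge>1. e0 \<le> pv a m K \<bullet> (SigM K (1 / real K) *\<^sub>v pv a m K) \<and> pv a m K \<bullet> (SigM K (1 / real K) *\<^sub>v pv a m K) \<le> M0"
    unfolding e0_def M0_def using P1_K by blast
  then show ?thesis using e0p e0M by blast
qed

lemma P3_conv:
  fixes a m :: real assumes am: "a + m \<noteq> 0"
  shows "convergent (\<lambda>K. (\<Sum>i<K. (pv a m K $ i)^2 * SigM K (1 / real K) $$ (i, i)) / (pv a m K \<bullet> (SigM K (1 / real K) *\<^sub>v pv a m K)))"
proof -
  define s where "s = (\<lambda>K. (\<Sum>i<K. eps i) / real K)"
  define A where "A = a^2 + m^2"
  have Ap: "A > 0" unfolding A_def using am by (auto simp: sum_power2_gt_zero_iff)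
  have ev: "eventually (\<lambda>K. (1 + 1 / real K) * (A + 2 * a * m * s K) / (A + 2 * a * m * s K + (a + m * s K)^2)
     = (\<Sum>i<K. (pv a m K $ i)^2 * SigM K (1 / real K) $$ (i, i)) / (pv a m K \<bullet> (SigM K (1 / real K) *\<^sub>v pv a m K))) sequentially"
    using eventually_gt_at_top[of 0]
  proof eventually_elim
    case (elim K)
    have "(\<Sum>i<K. (pv a m K $ i)^2 * SigM K (1 / real K) $$ (i, i)) = (\<Sum>i<K. (pv a m K $ i)^2 * (1 + 1 / real K))"
      unfolding SigM_def by (intro sum.cong) auto
    also have "\<dots> = (1 + 1 / real K) * (A + 2 * a * m * s K)"
      unfolding sum_distrib_right[symmetric] pv_sums(1)[OF elim] A_def s_def by simp
    finally show ?case unfolding pv_quad[OF elim] A_def s_def by simp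
  qed
  have Aa: "A + a^2 \<noteq> 0" using Ap zero_le_power2[of a] by linarith
  have s0: "s \<longlonglongrightarrow> 0" unfolding s_def by (rule sK_lim)
  have "(\<lambda>K. (1 + 1 / real K) * (A + 2 * a * m * s K) / (A + 2 * a * m * s K + (a + m * s K)^2))
     \<longlonglongrightarrow> (1 + 0) * (A + 2 * a * m * 0) / (A + 2 * a * m * 0 + (a + m * 0)^2)"
    using Ap by (intro tendsto_intros s0 lim_const_over_n[of 1, simplified]) (use Aa in auto)
  then have "(\<lambda>K. (\<Sum>i<K. (pv a m K $ i)^2 * SigM K (1 / real K) $$ (i, i)) / (pv a m K \<bullet> (SigM K (1 / real K) *\<^sub>v pv a m K)))
     \<longlonglongrightarrow> (1 + 0) * (A + 2 * a * m * 0) / (A + 2 * a * m * 0 + (a + m * 0)^2)"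
    by (rule Lim_transform_eventually[OF _ ev])
  then show ?thesis unfolding convergent_def by blast
qed



theorem mainTheorem7:
  fixes r C :: real
  assumes "r > 0"
  shows "\<exists>(Sig :: nat \<Rightarrow> real mat) (p :: nat \<Rightarrow> real vec) (g :: nat \<Rightarrow> real vec).
    (\<forall>K. pos_def_mat (Sig K) K \<and> p K \<in> carrier_vec K \<and> g K \<in> carrier_vec K) \<and>
    (\<exists>eps M. 0 < eps \<and> eps \<le> M \<and>
       (\<forall>K\<ge>1. eps \<le> p K \<bullet> (Sig K *\<^sub>v p K) \<and> p K \<bullet> (Sig K *\<^sub>v p K) \<le> M)) \<and>
    convergent (\<lambda>K. (\<Sum>i<K. (p K $ i)\<^sup>2 * Sig K $$ (i, i)) / (p K \<bullet> (Sig K *\<^sub>v p K))) \<and>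
    (\<forall>d1 :: nat \<Rightarrow> nat.
       (\<forall>K. d1 K \<le> K) \<and> filterlim d1 at_top sequentially \<and>
       (\<lambda>K. real (K - d1 K) / real (d1 K)) \<longlonglongrightarrow> r
       \<longrightarrow>
       (\<lambda>K. measure_pmf.variance (S_dist K (d1 K)) (\<lambda>T. block_var (Sig K) (p K) T)) \<longlonglongrightarrow> 0 \<and>
       (\<lambda>K. measure_pmf.variance (S_dist K (d1 K)) (\<lambda>T. block_var (Sig K) (p K) ({..<K} - T))) \<longlonglongrightarrow> 0 \<and>
       (\<forall>e>0. (\<lambda>K. measure_pmf.prob (S_dist K (d1 K))
                 {T. \<bar>delta_resid (Sig K) (p K) (g K) T - C\<bar> > e}) \<longlonglongrightarrow> 0))"
proof -
  define x0 where "x0 = 1 / (1 + r)"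
  have x0: "0 < x0" "x0 < 1" unfolding x0_def using assms by auto
  obtain a m l where l2: "l^2 = 1" and am: "a + m \<noteq> 0"
    and N2: "(a + m * l) * x0 + (1 - x0) * (a * x0) / (1 + x0) + a * (x0 + (1 - x0) * x0 / (1 + x0)) \<noteq> 0"
    and FC: "Fz a m l x0 0 0 = C"
    using params_exist[OF x0, of C] by blast
  have cont: "continuous (at (x0, 0, 0)) (\<lambda>z. Fz a m l (fst z) (fst (snd z)) (snd (snd z)))"
    by (rule Fz_cont[OF x0 N2])
  define Sig where "Sig = (\<lambda>K::nat. SigM K (1 / real K))"
  define p where "p = (\<lambda>K. pv a m K)"
  define g where "g = (\<lambda>K. gv l K)"
  have part1: "\<forall>K. pos_def_mat (Sig K) K \<and> p K \<in> carrier_vec K \<and> g K \<in> carrier_vec K"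
    unfolding Sig_def p_def g_def pv_def gv_def using posdef_Sig by auto
  have part2: "\<exists>eps M. 0 < eps \<and> eps \<le> M \<and>
       (\<forall>K\<ge>1. eps \<le> p K \<bullet> (Sig K *\<^sub>v p K) \<and> p K \<bullet> (Sig K *\<^sub>v p K) \<le> M)"
    unfolding Sig_def p_def by (rule P1_bounds[OF am])
  have part3: "convergent (\<lambda>K. (\<Sum>i<K. (p K $ i)\<^sup>2 * Sig K $$ (i, i)) / (p K \<bullet> (Sig K *\<^sub>v p K)))"
    unfolding Sig_def p_def by (rule P3_conv[OF am])
  have part4: "(\<lambda>K. measure_pmf.variance (S_dist K (d1 K)) (\<lambda>T. block_var (Sig K) (p K) T)) \<longlonglongrightarrow> 0 \<and>
       (\<lambda>K. measure_pmf.variance (S_dist K (d1 K)) (\<lambda>T. block_var (Sig K) (p K) ({..<K} - T))) \<longlonglongrightarrow> 0 \<and>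
       (\<forall>e>0. (\<lambda>K. measure_pmf.prob (S_dist K (d1 K))
                 {T. \<bar>delta_resid (Sig K) (p K) (g K) T - C\<bar> > e}) \<longlonglongrightarrow> 0)"
    if dK: "\<forall>K. d1 K \<le> K" and dinf: "filterlim d1 at_top sequentially"
      and dr: "(\<lambda>K. real (K - d1 K) / real (d1 K)) \<longlonglongrightarrow> r" for d1 :: "nat \<Rightarrow> nat"
  proof -
    have dK': "\<And>K. d1 K \<le> K" using dK by blast
    have evpos: "eventually (\<lambda>K. d1 K > 0) sequentially"
    proof -
      have "eventually (\<lambda>K. 1 \<le> d1 K) sequentially" using dinf unfolding filterlim_at_top by blast
      then show ?thesis by (rule eventually_mono) simp
    qed
    have dlim: "(\<lambda>K. real (d1 K) / real K) \<longlonglongrightarrow> x0"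
    proof -
      have "(\<lambda>K. 1 / (1 + real (K - d1 K) / real (d1 K))) \<longlonglongrightarrow> 1 / (1 + r)"
        using assms by (intro tendsto_intros dr) auto
      moreover have "eventually (\<lambda>K. 1 / (1 + real (K - d1 K) / real (d1 K)) = real (d1 K) / real K) sequentially"
        using evpos
      proof eventually_elim
        case (elim K)
        have "real (K - d1 K) = real K - real (d1 K)" using dK' by (simp add: of_nat_diff)
        then show ?case using elim by (simp add: field_simps)
      qed
      ultimately show ?thesis unfolding x0_def by (rule Lim_transform_eventually)
    qed
    have v1: "(\<lambda>K. measure_pmf.variance (S_dist K (d1 K)) (\<lambda>T. block_var (Sig K) (p K) T)) \<longlonglongrightarrow> 0"
    proof (rule tendsto_sandwich[of "\<lambda>_. 0" _ _ "\<lambda>K. (4 * \<bar>a * m\<bar> + m^2)^2 * (1 / real K)"])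
      show "\<forall>\<^sub>F K in sequentially. 0 \<le> measure_pmf.variance (S_dist K (d1 K)) (\<lambda>T. block_var (Sig K) (p K) T)"
        unfolding S_dist_SS using var_nonneg[OF SS_finite SS_nonempty[OF dK']] by simp
      show "\<forall>\<^sub>F K in sequentially. measure_pmf.variance (S_dist K (d1 K)) (\<lambda>T. block_var (Sig K) (p K) T) \<le> (4 * \<bar>a * m\<bar> + m^2)^2 * (1 / real K)"
        using eventually_gt_at_top[of 0]
        by eventually_elim (use var_T[OF _ dK'] in \<open>simp add: Sig_def p_def\<close>)
      show "(\<lambda>K. (4 * \<bar>a * m\<bar> + m^2)^2 * (1 / real K)) \<longlonglongrightarrow> 0"
        using tendsto_mult[OF tendsto_const lim_const_over_n[of 1]] by simp
    qed simp
    have v2: "(\<lambda>K. measure_pmf.variance (S_dist K (d1 K)) (\<lambda>T. block_var (Sig K) (p K) ({..<K} - T))) \<longlonglongrightarrow> 0"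
    proof (rule tendsto_sandwich[of "\<lambda>_. 0" _ _ "\<lambda>K. (4 * (4 * \<bar>a * m\<bar> + m^2)^2) * (1 / real K)"])
      show "\<forall>\<^sub>F K in sequentially. 0 \<le> measure_pmf.variance (S_dist K (d1 K)) (\<lambda>T. block_var (Sig K) (p K) ({..<K} - T))"
        unfolding S_dist_SS using var_nonneg[OF SS_finite SS_nonempty[OF dK']] by simp
      show "\<forall>\<^sub>F K in sequentially. measure_pmf.variance (S_dist K (d1 K)) (\<lambda>T. block_var (Sig K) (p K) ({..<K} - T)) \<le> (4 * (4 * \<bar>a * m\<bar> + m^2)^2) * (1 / real K)"
        using eventually_gt_at_top[of 0]
        by eventually_elim (use var_U[OF _ dK'] in \<open>simp add: Sig_def p_def\<close>)
      show "(\<lambda>K. (4 * (4 * \<bar>a * m\<bar> + m^2)^2) * (1 / real K)) \<longlonglongrightarrow> 0"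
        using tendsto_mult[OF tendsto_const lim_const_over_n[of 1]] by simp
    qed simp
    have v3: "\<forall>e>0. (\<lambda>K. measure_pmf.prob (S_dist K (d1 K))
                 {T. \<bar>delta_resid (Sig K) (p K) (g K) T - C\<bar> > e}) \<longlonglongrightarrow> 0"
    proof (intro allI impI)
      fix e :: real assume e: "e > 0"
      have DG: "\<And>K T. K > 0 \<Longrightarrow> T \<in> SS K (d1 K) \<Longrightarrow> delta_resid (Sig K) (p K) (g K) T
          = Fz a m l (d1 K / K) (EE T / K) (EE ({..<K} - T) / K)"
      proof -
        fix K :: nat and T assume K: "K > 0" and T: "T \<in> SS K (d1 K)"
        then have TK: "T \<subseteq> {..<K}" and cT: "card T = d1 K" unfolding SS_def by auto
        show "delta_resid (Sig K) (p K) (g K) T = Fz a m l (d1 K / K) (EE T / K) (EE ({..<K} - T) / K)"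
          unfolding Sig_def p_def g_def using delta_Fz[OF K TK, of a m l] cT by simp
      qed
      show "(\<lambda>K. measure_pmf.prob (S_dist K (d1 K)) {T. \<bar>delta_resid (Sig K) (p K) (g K) T - C\<bar> > e}) \<longlonglongrightarrow> 0"
        using prob_to0[OF cont dK' dlim DG e] unfolding FC .
    qed
    show ?thesis using v1 v2 v3 by blast
  qed
  show ?thesis
    apply (rule exI[of _ Sig], rule exI[of _ p], rule exI[of _ g])
    using part1 part2 part3 part4 by blast
qed

end
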